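(* Let $U,L\in\mathcal{P}(n,d)$ with $U$ weakly above $L$, and let $\Lambda=\Lambda_{M[U,L]}$. Then $\mathrm{st}_L(C)=\Lambda(\mathcal{E}(C))$ for all $C\in\mathcal{P}[U,L]$. In particular, \[ \mathcal{S}_{\mathsf{lex}}(M[U,L])=\{\mathrm{st}_L(C):C\in\mathcal{P}[U,L]\}. \]
   Context: $\mathcal{P}(n,d)$ is the set of words $C=C_1\cdots C_n$ in letters $\mathbf{e}$ (east step $(1,0)$) and $\mathbf{n}$ (north step $(0,1)$) with exactly $d$ letters $\mathbf{e}$, viewed as lattice paths from $(0,0)$ to $(d,n-d)$; the realization of the $i$-th step is the unit segment it traverses. $\mathcal{E}(C)=\{i:C_i=\mathbf{e}\}$. $U$ is weakly above $L$ if every prefix $L_1\cdots L_k$ has at least as many $\mathbf{e}$'s as $U_1\cdots U_k$. $\mathcal{P}[U,L]$ is the set of $C\in\mathcal{P}(n,d)$ weakly below $U$ and weakly above $L$; $M[U,L]$ is the matroid on $[n]$ with bases $\{\mathcal{E}(C):C\in\mathcal{P}[U,L]\}$. Statistic: for $C$ weakly above $L$, the $L$-demarcation path $D$ starts at $(0,0)$ and its $i$-th step is $\mathbf{n}$ if $C_i=L_i=\mathbf{n}$; $\mathbf{e}$ if $C_i=L_i=\mathbf{e}$; a diagonal step $(1,1)$ if $C_i=\mathbf{n},L_i=\mathbf{e}$; empty if $C_i=\mathbf{e},L_i=\mathbf{n}$. The $L$-marking path $P$ goes from $(0,0)$ to $(d,n-d)$ with steps $(1,1)$, $(1,0)$,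 $(0,1)$: it uses a diagonal step whenever possible without going above $C$ or below $D$; if a diagonal step would go above $C$ it uses an east step instead, and if it would go below $D$ it uses a north step instead. An east step $C_i$ is marked if its realization is also an east step of $P$; $\mathrm{st}_L(C)\subseteq\mathcal{E}(C)$ is the set of indices of unmarked east steps of $C$. $\mathcal{S}_{\mathsf{lex}}(M)$ for a matroid $M$ on finite $E\subset\mathbb{N}$: $\{\tau\subseteq E:\prod_{i\in\tau}x_i\notin\mathrm{in}(I(V_M))\}$ where $V_M=\{\mathbf{e}_B:B$ basis$\}$, $I(V_M)\subseteq\mathbb{R}[x_e:e\in E]$ its vanishing ideal, initial ideal for lex order with $x_e\succ x_f$ for $e<f$ ($\{\emptyset\}$ if $E=\emptyset$). $\{\Lambda_M\}$ is the unique family of bijections $\Lambda_M:\mathcal{B}(M)\to\mathcal{S}_{\mathsf{lex}}(M)$ over all matroids with ground set a finite subset of $\mathbb{N}$ such that for $M$ with nonempty ground set, largest element $m$, and basis $B$: $\Lambda_M(B)\subseteq B$; $\Lambda_M(B)=\Lambda_{M\backslash m}(B)$ if $m\notin B$; $\Lambda_M(B)\setminus\{m\}=\Lambda_{M/m}(B\setminus\{m\})$ if $m\in B$. *)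

theory Defs
  imports Complex_Main "HOL-Library.Poly_Mapping"
begin

section \<open>Lattice paths (words in e/n); True = east step e, False = north step n\<close>

definition cnt_e :: "bool list \<Rightarrow> nat" where
  "cnt_e w = length (filter id w)"

definition cnt_n :: "bool list \<Rightarrow> nat" where
  "cnt_n w = length (filter Not w)"

definition paths :: "nat \<Rightarrow> nat \<Rightarrow> bool list set" where
  "paths n d = {C. length C = n \<and> cnt_e C = d}"

definition weakly_above :: "bool list \<Rightarrow> bool list \<Rightarrow> bool" where
  "weakly_above U L \<longleftrightarrow> (\<forall>k. cnt_e (take k U) \<le> cnt_e (take k L))"

definition Es :: "bool list \<Rightarrow> nat set" where
  "Es C = {i. 1 \<le> i \<and> i \<le> length C \<and> C ! (i - 1)}"

definition interval_paths :: "nat \<Rightarrow> nat \<Rightarrow> bool list \<Rightarrow> bool list \<Rightarrow> bool list set" where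
  "interval_paths n d U L = {C \<in> paths n d. weakly_above U C \<and> weakly_above C L}"

type_synonym matroid = "nat set \<times> nat set set"

definition ground :: "matroid \<Rightarrow> nat set" where "ground M = fst M"
definition bases :: "matroid \<Rightarrow> nat set set" where "bases M = snd M"

definition is_matroid :: "matroid \<Rightarrow> bool" where
  "is_matroid M \<longleftrightarrow> finite (ground M) \<and> bases M \<noteq> {} \<and> (\<forall>B\<in>bases M. B \<subseteq> ground M) \<and>
     (\<forall>B1\<in>bases M. \<forall>B2\<in>bases M. \<forall>x\<in>B1 - B2. \<exists>y\<in>B2 - B1. insert y (B1 - {x}) \<in> bases M)"

definition lattice_path_matroid :: "nat \<Rightarrow> nat \<Rightarrow> bool list \<Rightarrow> bool list \<Rightarrow> matroid" where
  "lattice_path_matroid n d U L = ({1..n}, Es ` interval_paths n d U L)"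

text \<open>Deletion and contraction of a single element (standard, covering loops/coloops).\<close>
definition mdelete :: "matroid \<Rightarrow> nat \<Rightarrow> matroid" where
  "mdelete M m = (ground M - {m},
     if (\<forall>B\<in>bases M. m \<in> B) then (\<lambda>B. B - {m}) ` bases M else {B \<in> bases M. m \<notin> B})"

definition mcontract :: "matroid \<Rightarrow> nat \<Rightarrow> matroid" where
  "mcontract M m = (ground M - {m},
     if (\<forall>B\<in>bases M. m \<notin> B) then bases M else (\<lambda>B. B - {m}) ` {B \<in> bases M. m \<in> B})"

section \<open>Polynomials in variables x_e (e :: nat) over the reals, as finitely supported maps\<close>

type_synonym rpoly = "(nat \<Rightarrow>\<^sub>0 nat) \<Rightarrow>\<^sub>0 real"

definition poly_in :: "nat set \<Rightarrow> rpoly \<Rightarrow> bool" where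
  "poly_in E (f::rpoly) \<longleftrightarrow> (\<forall>\<alpha>\<in>Poly_Mapping.keys f. Poly_Mapping.keys \<alpha> \<subseteq> E)"

definition evalp :: "(nat \<Rightarrow> real) \<Rightarrow> rpoly \<Rightarrow> real" where
  "evalp v (f::rpoly) = (\<Sum>\<alpha>\<in>Poly_Mapping.keys f. Poly_Mapping.lookup f \<alpha> * (\<Prod>i\<in>Poly_Mapping.keys \<alpha>. v i ^ Poly_Mapping.lookup \<alpha> i))"

definition vanishing_ideal :: "matroid \<Rightarrow> rpoly set" where
  "vanishing_ideal M = {f. poly_in (ground M) f \<and>
      (\<forall>B\<in>bases M. evalp (\<lambda>i. if i \<in> B then 1 else 0) f = 0)}"

text \<open>Lex order with x_e > x_f for e < f: compare exponents of smaller variables first.\<close>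
definition lex_gt :: "(nat \<Rightarrow>\<^sub>0 nat) \<Rightarrow> (nat \<Rightarrow>\<^sub>0 nat) \<Rightarrow> bool" where
  "lex_gt \<alpha> \<beta> \<longleftrightarrow> (\<exists>i. Poly_Mapping.lookup \<beta> i < Poly_Mapping.lookup \<alpha> i \<and> (\<forall>j<i. Poly_Mapping.lookup \<alpha> j = Poly_Mapping.lookup \<beta> j))"

definition lead_mon :: "rpoly \<Rightarrow> (nat \<Rightarrow>\<^sub>0 nat)" where
  "lead_mon f = (THE \<alpha>. \<alpha> \<in> Poly_Mapping.keys f \<and> (\<forall>\<beta>\<in>Poly_Mapping.keys f. \<beta> \<noteq> \<alpha> \<longrightarrow> lex_gt \<alpha> \<beta>))"

definition lead_term :: "rpoly \<Rightarrow> rpoly" where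
  "lead_term f = Poly_Mapping.single (lead_mon f) (Poly_Mapping.lookup f (lead_mon f))"

inductive_set init_ideal :: "nat set \<Rightarrow> rpoly set \<Rightarrow> rpoly set" for E I where
  zero: "0 \<in> init_ideal E I"
| lt: "f \<in> I \<Longrightarrow> f \<noteq> 0 \<Longrightarrow> lead_term f \<in> init_ideal E I"
| add: "g \<in> init_ideal E I \<Longrightarrow> h \<in> init_ideal E I \<Longrightarrow> g + h \<in> init_ideal E I"
| mult: "g \<in> init_ideal E I \<Longrightarrow> poly_in E h \<Longrightarrow> h * g \<in> init_ideal E I"

definition sq_monomial :: "nat set \<Rightarrow> rpoly" where
  "sq_monomial \<tau> = Poly_Mapping.single (\<Sum>i\<in>\<tau>. Poly_Mapping.single i (1::nat)) (1::real)"

definition S_lex :: "matroid \<Rightarrow> nat set set" where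
  "S_lex M = (if ground M = {} then {{}} else
     {\<tau>. \<tau> \<subseteq> ground M \<and> sq_monomial \<tau> \<notin> init_ideal (ground M) (vanishing_ideal M)})"

definition is_Lambda_family :: "(matroid \<Rightarrow> nat set \<Rightarrow> nat set) \<Rightarrow> bool" where
  "is_Lambda_family Lam \<longleftrightarrow> (\<forall>M. is_matroid M \<longrightarrow>
     bij_betw (Lam M) (bases M) (S_lex M) \<and>
     (ground M \<noteq> {} \<longrightarrow> (\<forall>B\<in>bases M.
        Lam M B \<subseteq> B \<and>
        (Max (ground M) \<notin> B \<longrightarrow> Lam M B = Lam (mdelete M (Max (ground M))) B) \<and>
        (Max (ground M) \<in> B \<longrightarrow>
           Lam M B - {Max (ground M)} = Lam (mcontract M (Max (ground M))) (B - {Max (ground M)})))))"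

definition vtx :: "bool list \<Rightarrow> nat \<Rightarrow> nat \<times> nat" where
  "vtx C k = (cnt_e (take k C), cnt_n (take k C))"

text \<open>Step vector of the L-demarcation path for letters c = C_i, l = L_i.\<close>
definition dstep :: "bool \<Rightarrow> bool \<Rightarrow> nat \<times> nat" where
  "dstep c l = (if \<not> c \<and> \<not> l then (0, 1) else if c \<and> l then (1, 0)
                else if \<not> c \<and> l then (1, 1) else (0, 0))"

definition dvtx :: "bool list \<Rightarrow> bool list \<Rightarrow> nat \<Rightarrow> nat \<times> nat" where
  "dvtx C L k = ((\<Sum>i<k. fst (dstep (C ! i) (L ! i))), (\<Sum>i<k. snd (dstep (C ! i) (L ! i))))"

definition seg :: "nat \<times> nat \<Rightarrow> nat \<times> nat \<Rightarrow> (real \<times> real) set" where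
  "seg p q = {(real (fst p) + t * (real (fst q) - real (fst p)),
               real (snd p) + t * (real (snd q) - real (snd p))) | t. 0 \<le> t \<and> t \<le> 1}"

definition realC :: "bool list \<Rightarrow> (real \<times> real) set" where
  "realC C = (\<Union>k<length C. seg (vtx C k) (vtx C (Suc k)))"

definition realD :: "bool list \<Rightarrow> bool list \<Rightarrow> (real \<times> real) set" where
  "realD C L = (\<Union>k<length C. seg (dvtx C L k) (dvtx C L (Suc k)))"

definition strictly_above :: "(real \<times> real) set \<Rightarrow> real \<times> real \<Rightarrow> bool" where
  "strictly_above S p \<longleftrightarrow> (\<exists>y. (fst p, y) \<in> S) \<and> (\<forall>y. (fst p, y) \<in> S \<longrightarrow> y < snd p)"

definition strictly_below :: "(real \<times> real) set \<Rightarrow> real \<times> real \<Rightarrow> bool" where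
  "strictly_below S p \<longleftrightarrow> (\<exists>y. (fst p, y) \<in> S) \<and> (\<forall>y. (fst p, y) \<in> S \<longrightarrow> snd p < y)"

text \<open>One step of the L-marking path from vertex (a,b). Once the abscissa d is reached only
  north steps remain possible (the path ends at (d, n-d)).\<close>
definition mark_next :: "bool list \<Rightarrow> bool list \<Rightarrow> nat \<times> nat \<Rightarrow> nat \<times> nat" where
  "mark_next C L p = (let (a, b) = p in
     if a = cnt_e C then (a, b + 1)
     else if (\<exists>q\<in>seg (a, b) (a + 1, b + 1). strictly_above (realC C) q) then (a + 1, b)
     else if (\<exists>q\<in>seg (a, b) (a + 1, b + 1). strictly_below (realD C L) q) then (a, b + 1)
     else (a + 1, b + 1))"

definition mvtx :: "bool list \<Rightarrow> bool list \<Rightarrow> nat \<Rightarrow> nat \<times> nat" where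
  "mvtx C L k = (mark_next C L ^^ k) (0, 0)"

definition mark_east :: "bool list \<Rightarrow> bool list \<Rightarrow> (nat \<times> nat) set" where
  "mark_east C L = {mvtx C L k | k. (\<forall>j\<le>k. mvtx C L j \<noteq> (cnt_e C, cnt_n C)) \<and>
       mvtx C L (Suc k) = (fst (mvtx C L k) + 1, snd (mvtx C L k))}"

text \<open>st_L(C): indices of unmarked east steps of C. The east step C_i starts at vtx C (i-1);
  it is marked iff P has an east step with the same realization, i.e. the same start point.\<close>
definition stL :: "bool list \<Rightarrow> bool list \<Rightarrow> nat set" where
  "stL L C = {i \<in> Es C. vtx C (i - 1) \<notin> mark_east C L}"

end

theory Submission
  imports Defs
begin


lemma lex_gt_irrefl: "\<not> lex_gt a a"
  unfolding lex_gt_def by auto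

lemma lex_gt_trans: assumes "lex_gt a b" "lex_gt b c" shows "lex_gt a c"
proof -
  obtain i where i: "Poly_Mapping.lookup b i < Poly_Mapping.lookup a i" "\<forall>j<i. Poly_Mapping.lookup a j = Poly_Mapping.lookup b j"
    using assms(1) unfolding lex_gt_def by blast
  obtain k where k: "Poly_Mapping.lookup c k < Poly_Mapping.lookup b k" "\<forall>j<k. Poly_Mapping.lookup b j = Poly_Mapping.lookup c j"
    using assms(2) unfolding lex_gt_def by blast
  show ?thesis unfolding lex_gt_def
  proof (cases "i < k")
    case True
    then show "\<exists>i. Poly_Mapping.lookup c i < Poly_Mapping.lookup a i \<and> (\<forall>j<i. Poly_Mapping.lookup a j = Poly_Mapping.lookup c j)"
      using i k by (intro exI[of _ i]) auto
  next
    case False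
    then show "\<exists>i. Poly_Mapping.lookup c i < Poly_Mapping.lookup a i \<and> (\<forall>j<i. Poly_Mapping.lookup a j = Poly_Mapping.lookup c j)"
      using i k by (intro exI[of _ k]) (metis le_less linorder_not_le order.strict_trans) 
  qed
qed

lemma lex_gt_asym: "lex_gt a b \<Longrightarrow> \<not> lex_gt b a"
  using lex_gt_trans lex_gt_irrefl by blast

lemma lex_gt_total: assumes "a \<noteq> b" shows "lex_gt a b \<or> lex_gt b a"
proof -
  have "\<exists>i. Poly_Mapping.lookup a i \<noteq> Poly_Mapping.lookup b i" using assms by (metis poly_mapping_eqI)
  define i where "i = (LEAST i. Poly_Mapping.lookup a i \<noteq> Poly_Mapping.lookup b i)"
  have ne: "Poly_Mapping.lookup a i \<noteq> Poly_Mapping.lookup b i" unfolding i_def by (rule LeastI_ex) fact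
  have eq: "\<forall>j<i. Poly_Mapping.lookup a j = Poly_Mapping.lookup b j" unfolding i_def using not_less_Least by blast
  show ?thesis unfolding lex_gt_def
    using ne eq by (cases "Poly_Mapping.lookup a i < Poly_Mapping.lookup b i") (auto intro!: exI[of _ i] simp: linorder_neq_iff)
qed

lemma lex_max_exists:
  assumes "finite A" "A \<noteq> {}"
  shows "\<exists>m\<in>A. \<forall>b\<in>A. b \<noteq> m \<longrightarrow> lex_gt m b"
  using assms
proof (induction A rule: finite_ne_induct)
  case (singleton x) then show ?case by auto
next
  case (insert x F)
  then obtain m where m: "m \<in> F" "\<forall>b\<in>F. b \<noteq> m \<longrightarrow> lex_gt m b" by blast
  show ?case
  proof (cases "lex_gt x m")
    case True
    then show ?thesis using m lex_gt_trans by (intro bexI[of _ x]) auto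
  next
    case False
    moreover have "x \<noteq> m" using insert(3) m(1) by blast
    ultimately have "lex_gt m x" using lex_gt_total by metis
    then show ?thesis using m by (intro bexI[of _ m]) auto
  qed
qed

lemma lead_mon_unique:
  assumes "m \<in> Poly_Mapping.keys f" "\<forall>b\<in>Poly_Mapping.keys f. b \<noteq> m \<longrightarrow> lex_gt m b"
  shows "lead_mon f = m"
  unfolding lead_mon_def
proof (rule the_equality)
  show "m \<in> Poly_Mapping.keys f \<and> (\<forall>b\<in>Poly_Mapping.keys f. b \<noteq> m \<longrightarrow> lex_gt m b)" using assms by blast
next
  fix a assume "a \<in> Poly_Mapping.keys f \<and> (\<forall>b\<in>Poly_Mapping.keys f. b \<noteq> a \<longrightarrow> lex_gt a b)"
  then have a: "a \<in> Poly_Mapping.keys f" "\<forall>b\<in>Poly_Mapping.keys f. b \<noteq> a \<longrightarrow> lex_gt a b" by auto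
  show "a = m"
  proof (rule ccontr)
    assume "a \<noteq> m"
    then have "lex_gt a m" "lex_gt m a" using a assms by auto
    then show False using lex_gt_asym by blast
  qed
qed

lemma lead_mon_props:
  assumes "f \<noteq> 0"
  shows "lead_mon f \<in> Poly_Mapping.keys f" "\<And>b. b \<in> Poly_Mapping.keys f \<Longrightarrow> b \<noteq> lead_mon f \<Longrightarrow> lex_gt (lead_mon f) b"
proof -
  have "finite (Poly_Mapping.keys f)" "Poly_Mapping.keys f \<noteq> {}" using assms by auto
  then obtain m where m: "m \<in> Poly_Mapping.keys f" "\<forall>b\<in>Poly_Mapping.keys f. b \<noteq> m \<longrightarrow> lex_gt m b"
    using lex_max_exists by blast
  then have "lead_mon f = m" by (rule lead_mon_unique)
  then show "lead_mon f \<in> Poly_Mapping.keys f" "\<And>b. b \<in> Poly_Mapping.keys f \<Longrightarrow> b \<noteq> lead_mon f \<Longrightarrow> lex_gt (lead_mon f) b"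
    using m by auto
qed

definition setlex_gt :: "nat set \<Rightarrow> nat set \<Rightarrow> bool" where
  "setlex_gt s t \<longleftrightarrow> s \<noteq> t \<and> Min ((s - t) \<union> (t - s)) \<in> s"

definition mon :: "nat set \<Rightarrow> (nat \<Rightarrow>\<^sub>0 nat)" where
  "mon s = (\<Sum>i\<in>s. Poly_Mapping.single i (1::nat))"

lemma lookup_mon: "finite s \<Longrightarrow> Poly_Mapping.lookup (mon s) i = (if i \<in> s then 1 else 0)"
  unfolding mon_def by (simp add: lookup_sum lookup_single when_def)

lemma keys_mon: "finite s \<Longrightarrow> Poly_Mapping.keys (mon s) = s"
  by (auto simp: in_keys_iff lookup_mon split: if_splits)

lemma mon_inj: "finite s \<Longrightarrow> finite t \<Longrightarrow> mon s = mon t \<Longrightarrow> s = t"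
  by (metis keys_mon)

lemma sq_monomial_mon: "sq_monomial s = Poly_Mapping.single (mon s) 1"
  unfolding sq_monomial_def mon_def by simp

lemma setlex_gt_irrefl: "\<not> setlex_gt s s" unfolding setlex_gt_def by auto

lemma setlex_gt_total:
  assumes "finite s" "finite t" "s \<noteq> t" shows "setlex_gt s t \<or> setlex_gt t s"
proof -
  have "(s - t) \<union> (t - s) \<noteq> {}" using assms(3) by auto
  then have "Min ((s - t) \<union> (t - s)) \<in> (s - t) \<union> (t - s)" using assms by (intro Min_in) auto
  then show ?thesis unfolding setlex_gt_def using assms(3) by (auto simp: Un_commute)
qed

lemma setlex_mon:
  assumes "finite s" "finite t" "setlex_gt s t" shows "lex_gt (mon s) (mon t)"
proof -
  let ?D = "(s - t) \<union> (t - s)"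
  define i where "i = Min ?D"
  have fin: "finite ?D" using assms by auto
  have ne: "?D \<noteq> {}" using assms(3) unfolding setlex_gt_def by auto
  have iD: "i \<in> ?D" unfolding i_def using fin ne by (rule Min_in)
  have iss: "i \<in> s" using assms(3) unfolding setlex_gt_def i_def by blast
  have i: "i \<in> s" "i \<notin> t" using iD iss by auto
  have "\<forall>j<i. (j \<in> s) = (j \<in> t)"
  proof (intro allI impI)
    fix j assume "j < i"
    show "(j \<in> s) = (j \<in> t)"
    proof (rule ccontr)
      assume "(j \<in> s) \<noteq> (j \<in> t)"
      then have "j \<in> ?D" by auto
      then have "i \<le> j" unfolding i_def using fin by auto
      then show False using \<open>j < i\<close> by simp
    qed
  qed
  then show ?thesis unfolding lex_gt_def using i assms
    by (intro exI[of _ i]) (auto simp: lookup_mon)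
qed

lemma setlex_gt_asym:
  assumes "finite s" "finite t" "setlex_gt s t" shows "\<not> setlex_gt t s"
  using setlex_mon[OF assms] setlex_mon[OF assms(2,1)] lex_gt_asym by blast


definition dep :: "nat \<Rightarrow> nat set set \<Rightarrow> nat set \<Rightarrow> bool" where
  "dep n V t \<longleftrightarrow> (\<exists>c::nat set \<Rightarrow> real. c t \<noteq> 0 \<and> (\<forall>s. s \<subseteq> {1..n} \<longrightarrow> setlex_gt s t \<longrightarrow> c s = 0) \<and>
      (\<forall>B\<in>V. (\<Sum>s\<in>Pow B. c s) = 0))"

lemma init_dvd:
  assumes "g \<in> init_ideal E I"
  shows "\<forall>a\<in>Poly_Mapping.keys g. \<exists>f\<in>I. f \<noteq> 0 \<and> (\<forall>i. Poly_Mapping.lookup (lead_mon f) i \<le> Poly_Mapping.lookup a i)"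
  using assms
proof (induction rule: init_ideal.induct)
  case zero then show ?case by simp
next
  case (lt f)
  show ?case
  proof
    fix a assume "a \<in> Poly_Mapping.keys (lead_term f)"
    then have "a = lead_mon f" unfolding lead_term_def by (simp add: keys_single split: if_splits)
    then show "\<exists>f'\<in>I. f' \<noteq> 0 \<and> (\<forall>i. Poly_Mapping.lookup (lead_mon f') i \<le> Poly_Mapping.lookup a i)"
      using lt by (intro bexI[of _ f]) auto
  qed
next
  case (add g h)
  show ?case
  proof
    fix a assume "a \<in> Poly_Mapping.keys (g + h)"
    then have "a \<in> Poly_Mapping.keys g \<or> a \<in> Poly_Mapping.keys h" using keys_add[of g h] by auto
    then show "\<exists>f\<in>I. f \<noteq> 0 \<and> (\<forall>i. Poly_Mapping.lookup (lead_mon f) i \<le> Poly_Mapping.lookup a i)"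
    proof
      assume a: "a \<in> Poly_Mapping.keys g" show ?thesis using bspec[OF add.IH(1) a] .
    next
      assume a: "a \<in> Poly_Mapping.keys h" show ?thesis using bspec[OF add.IH(2) a] .
    qed
  qed
next
  case (mult g h)
  show ?case
  proof
    fix a assume "a \<in> Poly_Mapping.keys (h * g)"
    then obtain x y where xy: "a = x + y" "x \<in> Poly_Mapping.keys h" "y \<in> Poly_Mapping.keys g" using keys_mult by blast
    then obtain f where f: "f \<in> I" "f \<noteq> 0" "\<forall>i. Poly_Mapping.lookup (lead_mon f) i \<le> Poly_Mapping.lookup y i" using mult.IH xy(3) by blast
    have "\<forall>i. Poly_Mapping.lookup (lead_mon f) i \<le> Poly_Mapping.lookup a i" using f(3) xy(1) by (simp add: lookup_add add_increasing)
    then show "\<exists>f\<in>I. f \<noteq> 0 \<and> (\<forall>i. Poly_Mapping.lookup (lead_mon f) i \<le> Poly_Mapping.lookup a i)" using f by blast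
  qed
qed

lemma evalp_ind:
  "evalp (\<lambda>i. if i \<in> B then 1 else 0) f = (\<Sum>a\<in>Poly_Mapping.keys f. Poly_Mapping.lookup f a * (if Poly_Mapping.keys a \<subseteq> B then 1 else 0))"
  unfolding evalp_def
proof (rule sum.cong[OF refl])
  fix a assume "a \<in> Poly_Mapping.keys f"
  have "(\<Prod>i\<in>Poly_Mapping.keys a. (if i \<in> B then 1 else 0::real) ^ Poly_Mapping.lookup a i) = (if Poly_Mapping.keys a \<subseteq> B then 1 else 0)"
  proof (cases "Poly_Mapping.keys a \<subseteq> B")
    case True then show ?thesis by (auto intro!: prod.neutral)
  next
    case False
    then obtain i where i: "i \<in> Poly_Mapping.keys a" "i \<notin> B" by blast
    then have "Poly_Mapping.lookup a i \<noteq> 0" by (simp add: in_keys_iff)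
    then have "(if i \<in> B then 1 else 0::real) ^ Poly_Mapping.lookup a i = 0" using i by simp
    have "(\<Prod>i\<in>Poly_Mapping.keys a. (if i \<in> B then 1 else 0::real) ^ Poly_Mapping.lookup a i) = 0"
      by (rule prod_zero) (use i \<open>(if i \<in> B then 1 else 0::real) ^ Poly_Mapping.lookup a i = 0\<close> in auto)
    then show ?thesis using False by simp
  qed
  then show "Poly_Mapping.lookup f a * (\<Prod>i\<in>Poly_Mapping.keys a. (if i \<in> B then 1 else 0) ^ Poly_Mapping.lookup a i) =
        Poly_Mapping.lookup f a * (if Poly_Mapping.keys a \<subseteq> B then 1 else 0)" by simp
qed

lemma key_lemma:
  assumes fin: "finite t"
    and a0t: "\<forall>i. Poly_Mapping.lookup a0 i \<le> Poly_Mapping.lookup (mon t) i"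
    and gt: "lex_gt a0 a"
  shows "setlex_gt t (Poly_Mapping.keys a \<union> (t - Poly_Mapping.keys a0))"
proof -
  let ?g = "t - Poly_Mapping.keys a0"
  let ?s = "Poly_Mapping.keys a \<union> ?g"
  obtain i where i: "Poly_Mapping.lookup a i < Poly_Mapping.lookup a0 i" "\<forall>j<i. Poly_Mapping.lookup a0 j = Poly_Mapping.lookup a j"
    using gt unfolding lex_gt_def by blast
  have "Poly_Mapping.lookup a0 i \<le> 1" using a0t[rule_format, of i] fin by (simp add: lookup_mon split: if_splits)
  then have ai: "Poly_Mapping.lookup a i = 0" "Poly_Mapping.lookup a0 i = 1" using i(1) by auto
  have k0t: "Poly_Mapping.keys a0 \<subseteq> t"
  proof
    fix j assume "j \<in> Poly_Mapping.keys a0"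
    then have "Poly_Mapping.lookup a0 j \<noteq> 0" by (simp add: in_keys_iff)
    then show "j \<in> t" using a0t[rule_format, of j] fin by (auto simp: lookup_mon split: if_splits)
  qed
  have it: "i \<in> t" "i \<notin> ?s" using ai k0t by (auto simp: in_keys_iff)
  have below: "\<forall>j<i. (j \<in> t) = (j \<in> ?s)"
  proof (intro allI impI)
    fix j assume "j < i"
    then have "Poly_Mapping.lookup a0 j = Poly_Mapping.lookup a j" using i(2) by simp
    then have "(j \<in> Poly_Mapping.keys a0) = (j \<in> Poly_Mapping.keys a)" by (simp add: in_keys_iff)
    then show "(j \<in> t) = (j \<in> ?s)" using k0t by auto
  qed
  let ?D = "(t - ?s) \<union> (?s - t)"
  have finD: "finite ?D" using fin by auto
  have iD: "i \<in> ?D" using it by auto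
  have "\<forall>j\<in>?D. i \<le> j" using below by (metis Diff_iff Un_iff not_le)
  then have "Min ?D = i" using finD iD by (intro Min_eqI) auto
  then show ?thesis unfolding setlex_gt_def using it by auto
qed

lemma sq_in_init_imp_dep:
  assumes V: "V \<subseteq> Pow {1..n}" and t: "t \<subseteq> {1..n}"
    and mem: "sq_monomial t \<in> init_ideal {1..n} (vanishing_ideal ({1..n}, V))"
  shows "dep n V t"
proof -
  have fint: "finite t" using t finite_subset by blast
  have "mon t \<in> Poly_Mapping.keys (sq_monomial t)" by (simp add: sq_monomial_mon)
  then obtain f where f: "f \<in> vanishing_ideal ({1..n}, V)" "f \<noteq> 0"
      "\<forall>i. Poly_Mapping.lookup (lead_mon f) i \<le> Poly_Mapping.lookup (mon t) i"
    using init_dvd[OF mem] by blast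
  define a0 where "a0 = lead_mon f"
  have a0k: "a0 \<in> Poly_Mapping.keys f" and a0gt: "\<And>b. b \<in> Poly_Mapping.keys f \<Longrightarrow> b \<noteq> a0 \<Longrightarrow> lex_gt a0 b"
    using lead_mon_props[OF f(2)] unfolding a0_def by auto
  have a0t: "\<forall>i. Poly_Mapping.lookup a0 i \<le> Poly_Mapping.lookup (mon t) i" using f(3) a0_def by simp
  have k0t: "Poly_Mapping.keys a0 \<subseteq> t"
  proof
    fix j assume "j \<in> Poly_Mapping.keys a0"
    then have "Poly_Mapping.lookup a0 j \<noteq> 0" by (simp add: in_keys_iff)
    then show "j \<in> t" using a0t[rule_format, of j] fint by (auto simp: lookup_mon split: if_splits)
  qed
  define g where "g = t - Poly_Mapping.keys a0"
  have fing: "finite g" using fint g_def by auto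
  define c where "c s = (\<Sum>a\<in>{a\<in>Poly_Mapping.keys f. Poly_Mapping.keys a \<union> g = s}. Poly_Mapping.lookup f a)" for s
  have fiber_t: "{a\<in>Poly_Mapping.keys f. Poly_Mapping.keys a \<union> g = t} = {a0}"
  proof -
    have "a0 \<in> {a\<in>Poly_Mapping.keys f. Poly_Mapping.keys a \<union> g = t}" using a0k k0t g_def by auto
    moreover have "a = a0" if "a \<in> Poly_Mapping.keys f" "Poly_Mapping.keys a \<union> g = t" for a
    proof (rule ccontr)
      assume "a \<noteq> a0"
      then have "setlex_gt t (Poly_Mapping.keys a \<union> g)" using key_lemma[OF fint a0t a0gt[OF that(1)]] g_def by simp
      then show False using that(2) setlex_gt_irrefl by simp
    qed
    ultimately show ?thesis by blast
  qed
  have ct: "c t \<noteq> 0" unfolding c_def fiber_t using a0k by (simp add: in_keys_iff)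
  have cbig: "c s = 0" if "setlex_gt s t" for s
  proof -
    have emp: "{a\<in>Poly_Mapping.keys f. Poly_Mapping.keys a \<union> g = s} = {}"
    proof (rule ccontr)
      assume "{a\<in>Poly_Mapping.keys f. Poly_Mapping.keys a \<union> g = s} \<noteq> {}"
      then obtain a where a: "a \<in> Poly_Mapping.keys f" "Poly_Mapping.keys a \<union> g = s" by blast
      show False
      proof (cases "a = a0")
        case True
        then have "s = t" using a k0t g_def by auto
        then show False using that setlex_gt_irrefl by simp
      next
        case False
        then have "setlex_gt t s" using key_lemma[OF fint a0t a0gt[OF a(1)]] a(2) g_def by simp
        moreover have "finite s" using a(2) fing by auto
        ultimately show False using that setlex_gt_asym fint by blast
      qed
    qed
    show ?thesis unfolding c_def emp by simp
  qed
  have csum: "(\<Sum>s\<in>Pow B. c s) = 0" if B: "B \<in> V" for B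
  proof -
    have finB: "finite B" using B V by (meson PowD finite_atLeastAtMost finite_subset subsetD)
    have ev: "evalp (\<lambda>i. if i \<in> B then 1 else 0) f = 0" using f(1) B unfolding vanishing_ideal_def bases_def by simp
    define S where "S = {a\<in>Poly_Mapping.keys f. Poly_Mapping.keys a \<union> g \<subseteq> B}"
    have "(\<Sum>s\<in>Pow B. c s) = (\<Sum>s\<in>Pow B. \<Sum>a\<in>{a\<in>S. Poly_Mapping.keys a \<union> g = s}. Poly_Mapping.lookup f a)"
      unfolding c_def S_def by (intro sum.cong refl) (auto intro!: sum.cong)
    also have "\<dots> = (\<Sum>a\<in>S. Poly_Mapping.lookup f a)"
      by (rule sum.group) (auto simp: S_def finB)
    also have "\<dots> = 0"
    proof (cases "g \<subseteq> B")
      case True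
      then have "S = {a\<in>Poly_Mapping.keys f. Poly_Mapping.keys a \<subseteq> B}" unfolding S_def by auto
      then have "(\<Sum>a\<in>S. Poly_Mapping.lookup f a) = (\<Sum>a\<in>Poly_Mapping.keys f. Poly_Mapping.lookup f a * (if Poly_Mapping.keys a \<subseteq> B then 1 else 0))"
        by (simp add: sum.inter_filter[symmetric] if_distrib cong: if_cong)
      then show ?thesis using ev evalp_ind by metis
    next
      case False
      then have "S = {}" unfolding S_def by auto
      then show ?thesis by simp
    qed
    finally show ?thesis .
  qed
  show ?thesis unfolding dep_def using ct cbig csum by blast
qed

lemma dep_imp_sq_in_init:
  assumes V: "V \<subseteq> Pow {1..n}" and t: "t \<subseteq> {1..n}" and d: "dep n V t"
  shows "sq_monomial t \<in> init_ideal {1..n} (vanishing_ideal ({1..n}, V))"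
proof -
  obtain c :: "nat set \<Rightarrow> real" where c: "c t \<noteq> 0" "\<And>s. s \<subseteq> {1..n} \<Longrightarrow> setlex_gt s t \<Longrightarrow> c s = 0"
    "\<And>B. B \<in> V \<Longrightarrow> (\<Sum>s\<in>Pow B. c s) = 0"
    using d unfolding dep_def by blast
  define P where "P = Pow {1..n::nat}"
  have finP: "finite P" unfolding P_def by simp
  have finS: "\<And>s. s \<in> P \<Longrightarrow> finite s" unfolding P_def using finite_subset by auto
  define f :: rpoly where "f = (\<Sum>s\<in>P. Poly_Mapping.single (mon s) (c s))"
  have lk: "Poly_Mapping.lookup f (mon s) = c s" if "s \<in> P" for s
  proof -
    have "Poly_Mapping.lookup f (mon s) = (\<Sum>r\<in>P. (c r when mon r = mon s))"
      unfolding f_def by (simp add: lookup_sum lookup_single)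
    also have "\<dots> = (\<Sum>r\<in>{s}. (c r when mon r = mon s))"
      using that finS mon_inj by (intro sum.mono_neutral_right) (auto simp: finP when_def)
    finally show ?thesis by (simp add: when_def)
  qed
  have lk0: "Poly_Mapping.lookup f a = 0" if a: "a \<notin> mon ` P" for a
  proof -
    have "Poly_Mapping.lookup f a = (\<Sum>r\<in>P. (c r when mon r = a))"
      unfolding f_def by (simp add: lookup_sum lookup_single)
    also have "\<dots> = 0"
    proof (rule sum.neutral, rule ballI)
      fix r assume "r \<in> P"
      then have "mon r \<noteq> a" using a by blast
      then show "(c r when mon r = a) = 0" by (simp add: when_def)
    qed
    finally show ?thesis .
  qed
  have keysf: "Poly_Mapping.keys f \<subseteq> mon ` P" using lk0 by (auto simp: in_keys_iff)
  have tP: "t \<in> P" using t P_def by simp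
  have fne: "f \<noteq> 0" using lk[OF tP] c(1) by auto
  have polyin: "poly_in {1..n} f"
    unfolding poly_in_def
  proof
    fix a assume "a \<in> Poly_Mapping.keys f"
    then obtain s where s: "s \<in> P" "a = mon s" using keysf by blast
    then show "Poly_Mapping.keys a \<subseteq> {1..n}" using finS[OF s(1)] keys_mon P_def by simp
  qed
  have ev: "evalp (\<lambda>i. if i \<in> B then 1 else 0) f = 0" if B: "B \<in> V" for B
  proof -
    have BP: "B \<subseteq> {1..n}" using B V by auto
    have "evalp (\<lambda>i. if i \<in> B then 1 else 0) f = (\<Sum>a\<in>Poly_Mapping.keys f. Poly_Mapping.lookup f a * (if Poly_Mapping.keys a \<subseteq> B then 1 else 0))"
      by (rule evalp_ind)
    also have "\<dots> = (\<Sum>a\<in>mon ` P. Poly_Mapping.lookup f a * (if Poly_Mapping.keys a \<subseteq> B then 1 else 0))"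
      using keysf finP by (intro sum.mono_neutral_left) (auto simp: in_keys_iff)
    also have "\<dots> = (\<Sum>s\<in>P. c s * (if s \<subseteq> B then 1 else 0))"
    proof -
      have inj: "inj_on mon P" using finS mon_inj by (auto simp: inj_on_def)
      show ?thesis unfolding sum.reindex[OF inj] comp_def
        by (rule sum.cong[OF refl]) (simp add: lk finS keys_mon)
    qed
    also have "\<dots> = (\<Sum>s\<in>{s\<in>P. s \<subseteq> B}. c s)"
      by (simp add: sum.inter_filter[symmetric] finP if_distrib cong: if_cong)
    also have "{s\<in>P. s \<subseteq> B} = Pow B" using BP unfolding P_def by auto
    also have "(\<Sum>s\<in>Pow B. c s) = 0" using c(3) B by simp
    finally show ?thesis .
  qed
  have fI: "f \<in> vanishing_ideal ({1..n}, V)"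
    unfolding vanishing_ideal_def ground_def bases_def using polyin ev by simp
  have lm: "lead_mon f = mon t"
  proof (rule lead_mon_unique)
    show "mon t \<in> Poly_Mapping.keys f" using lk[OF tP] c(1) by (simp add: in_keys_iff)
    show "\<forall>b\<in>Poly_Mapping.keys f. b \<noteq> mon t \<longrightarrow> lex_gt (mon t) b"
    proof (intro ballI impI)
      fix b assume b: "b \<in> Poly_Mapping.keys f" "b \<noteq> mon t"
      then obtain s where s: "s \<in> P" "b = mon s" using keysf by blast
      have "c s \<noteq> 0" using b s lk by (simp add: in_keys_iff)
      moreover have "s \<noteq> t" using b s by auto
      ultimately have "setlex_gt t s" using setlex_gt_total[of t s] finS s tP c(2) P_def by auto
      then show "lex_gt (mon t) b" using s setlex_mon finS tP by auto
    qed
  qed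
  have "lead_term f \<in> init_ideal {1..n} (vanishing_ideal ({1..n}, V))"
    using fI fne by (rule init_ideal.lt)
  then have "Poly_Mapping.single (mon t) (c t) \<in> init_ideal {1..n} (vanishing_ideal ({1..n}, V))"
    unfolding lead_term_def lm lk[OF tP] .
  then have "Poly_Mapping.single 0 (1 / c t) * Poly_Mapping.single (mon t) (c t) \<in> init_ideal {1..n} (vanishing_ideal ({1..n}, V))"
    by (rule init_ideal.mult) (auto simp: poly_in_def keys_single)
  then show ?thesis using c(1) by (simp add: mult_single sq_monomial_mon)
qed

lemma S_lex_dep:
  assumes V: "V \<subseteq> Pow {1..n}" and n: "n \<ge> 1"
  shows "S_lex ({1..n}, V) = {t. t \<subseteq> {1..n} \<and> \<not> dep n V t}"
  using n sq_in_init_imp_dep[OF V] dep_imp_sq_in_init[OF V]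
  unfolding S_lex_def ground_def by auto


fun win :: "nat \<Rightarrow> nat set set \<Rightarrow> nat set \<Rightarrow> bool" where
  "win 0 V t = (V \<noteq> {})"
| "win (Suc n) V t = (if Suc n \<in> t
      then win n {B\<in>V. Suc n \<notin> B} t \<and> win n ((\<lambda>B. B - {Suc n}) ` {B\<in>V. Suc n \<in> B}) t
      else win n {B\<in>V. Suc n \<notin> B} t \<or> win n ((\<lambda>B. B - {Suc n}) ` {B\<in>V. Suc n \<in> B}) t)"

lemma win_cong: "(\<And>i. 1 \<le> i \<Longrightarrow> i \<le> n \<Longrightarrow> i \<in> t \<longleftrightarrow> i \<in> t') \<Longrightarrow> win n V t = win n V t'"
proof (induction n arbitrary: V)
  case 0 then show ?case by simp
next
  case (Suc n)
  have e: "Suc n \<in> t \<longleftrightarrow> Suc n \<in> t'" using Suc.prems by simp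
  have ih: "\<And>V. win n V t = win n V t'" using Suc.IH Suc.prems by simp
  show ?case unfolding win.simps e ih ..
qed

lemma sum_Pow_insert:
  assumes "finite B" "m \<notin> B"
  shows "(\<Sum>s\<in>Pow (insert m B). c s) = (\<Sum>s\<in>Pow B. c s + c (insert m s))"
proof -
  have inj: "inj_on (insert m) (Pow B)"
  proof (rule inj_onI)
    fix x y assume "x \<in> Pow B" "y \<in> Pow B" "insert m x = insert m y"
    then have "m \<notin> x" "m \<notin> y" using assms(2) by auto
    then show "x = y" using \<open>insert m x = insert m y\<close> by (metis insert_ident)
  qed
  have disj: "Pow B \<inter> insert m ` Pow B = {}" using assms(2) by auto
  have "(\<Sum>s\<in>Pow (insert m B). c s) = (\<Sum>s\<in>Pow B \<union> insert m ` Pow B. c s)" by (simp add: Pow_insert)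
  also have "\<dots> = (\<Sum>s\<in>Pow B. c s) + (\<Sum>s\<in>insert m ` Pow B. c s)"
    using assms(1) disj by (intro sum.union_disjoint) auto
  also have "(\<Sum>s\<in>insert m ` Pow B. c s) = (\<Sum>s\<in>Pow B. c (insert m s))"
    using sum.reindex[OF inj] by (simp add: comp_def)
  finally show ?thesis by (simp add: sum.distrib)
qed

lemma setlex_L1:
  assumes "s \<subseteq> {1..n}" "t \<subseteq> {1..n}"
  shows "setlex_gt (insert (Suc n) s) t \<longleftrightarrow> setlex_gt s t \<or> s = t"
proof -
  let ?m = "Suc n"
  have ms: "?m \<notin> s" "?m \<notin> t" using assms by auto
  show ?thesis
  proof (cases "s = t")
    case True
    then have "(insert ?m s - t) \<union> (t - insert ?m s) = {?m}" using ms by auto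
    then show ?thesis unfolding setlex_gt_def using True ms by auto
  next
    case False
    let ?D = "(s - t) \<union> (t - s)"
    have D: "(insert ?m s - t) \<union> (t - insert ?m s) = insert ?m ?D" using ms by auto
    have "finite s" "finite t" using assms finite_subset[OF _ finite_atLeastAtMost] by blast+
    then have fD: "finite ?D" "?D \<noteq> {}" using False by auto
    have "Min ?D \<in> ?D" using fD by (rule Min_in)
    then have lt: "Min ?D < ?m" using assms by auto
    have "Min (insert ?m ?D) = min ?m (Min ?D)" using fD by (simp add: Min_insert)
    then have MD: "Min (insert ?m ?D) = Min ?D" using lt by simp
    have "insert ?m s \<noteq> t" using ms by auto
    then show ?thesis unfolding setlex_gt_def D MD using False lt by auto
  qed
qed

lemma setlex_L2:
  assumes "s \<subseteq> {1..n}" "t \<subseteq> {1..n}"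
  shows "setlex_gt s (insert (Suc n) t) \<longleftrightarrow> setlex_gt s t"
proof -
  let ?m = "Suc n"
  have ms: "?m \<notin> s" "?m \<notin> t" using assms by auto
  show ?thesis
  proof (cases "s = t")
    case True
    then have "(s - insert ?m t) \<union> (insert ?m t - s) = {?m}" using ms by auto
    then show ?thesis unfolding setlex_gt_def using True ms by auto
  next
    case False
    let ?D = "(s - t) \<union> (t - s)"
    have D: "(s - insert ?m t) \<union> (insert ?m t - s) = insert ?m ?D" using ms by auto
    have "finite s" "finite t" using assms finite_subset[OF _ finite_atLeastAtMost] by blast+
    then have fD: "finite ?D" "?D \<noteq> {}" using False by auto
    have "Min ?D \<in> ?D" using fD by (rule Min_in)
    then have lt: "Min ?D < ?m" using assms by auto
    have "Min (insert ?m ?D) = min ?m (Min ?D)" using fD by (simp add: Min_insert)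
    then have MD: "Min (insert ?m ?D) = Min ?D" using lt by simp
    have "s \<noteq> insert ?m t" using ms by auto
    then show ?thesis unfolding setlex_gt_def D MD using False lt by auto
  qed
qed

lemma setlex_L3:
  assumes "m \<notin> s" "m \<notin> t" "finite s" "finite t"
  shows "setlex_gt (insert m s) (insert m t) \<longleftrightarrow> setlex_gt s t"
proof -
  let ?D = "(s - t) \<union> (t - s)"
  have D: "(insert m s - insert m t) \<union> (insert m t - insert m s) = ?D"
    using assms by auto
  have eq: "(insert m s = insert m t) = (s = t)" using assms(1,2) by (metis insert_ident)
  show ?thesis
  proof (cases "s = t")
    case True then show ?thesis unfolding setlex_gt_def by simp
  next
    case False
    then have fD: "finite ?D" "?D \<noteq> {}" using assms by auto
    have "Min ?D \<in> ?D" using fD by (rule Min_in)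
    then have "Min ?D \<noteq> m" using assms by auto
    then have "(Min ?D \<in> insert m s) = (Min ?D \<in> s)" by simp
    then show ?thesis unfolding setlex_gt_def D eq by simp
  qed
qed


lemma V0_sub: "V \<subseteq> Pow {1..Suc n} \<Longrightarrow> {B\<in>V. Suc n \<notin> B} \<subseteq> Pow {1..n}"
  by (auto simp: subset_iff le_Suc_eq)

lemma V1_sub: "V \<subseteq> Pow {1..Suc n} \<Longrightarrow> (\<lambda>B. B - {Suc n}) ` {B\<in>V. Suc n \<in> B} \<subseteq> Pow {1..n}"
  by (auto simp: subset_iff le_Suc_eq)

lemma finite_sub: "s \<subseteq> {1..n::nat} \<Longrightarrow> finite s"
  using finite_subset[OF _ finite_atLeastAtMost] by blast

lemma sumPow_split:
  assumes "B \<subseteq> {1..Suc n}" "Suc n \<in> B"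
  shows "(\<Sum>s\<in>Pow B. c s) = (\<Sum>s\<in>Pow (B - {Suc n}). c s + c (insert (Suc n) s))"
proof -
  have "B = insert (Suc n) (B - {Suc n})" using assms(2) by auto
  moreover have "finite (B - {Suc n})" using assms(1) finite_sub by blast
  ultimately show ?thesis using sum_Pow_insert[of "B - {Suc n}" "Suc n" c] by simp
qed

lemma sumPow_noM:
  assumes "Suc n \<notin> B"
  shows "(\<Sum>s\<in>Pow B. (if Suc n \<in> s then f s else g s)) = (\<Sum>s\<in>Pow B. g s)"
  using assms by (intro sum.cong) auto

lemma dep_step_notin:
  assumes V: "V \<subseteq> Pow {1..Suc n}" and t: "t \<subseteq> {1..n}"
    and V0def: "V0 = {B\<in>V. Suc n \<notin> B}" and V1def: "V1 = (\<lambda>B. B - {Suc n}) ` {B\<in>V. Suc n \<in> B}"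
  shows "dep (Suc n) V t \<longleftrightarrow> dep n V0 t \<and> dep n V1 t"
proof
  let ?m = "Suc n"
  assume "dep (Suc n) V t"
  then obtain c :: "nat set \<Rightarrow> real" where c: "c t \<noteq> 0" "\<And>s. s \<subseteq> {1..Suc n} \<Longrightarrow> setlex_gt s t \<Longrightarrow> c s = 0"
    "\<And>B. B \<in> V \<Longrightarrow> (\<Sum>s\<in>Pow B. c s) = 0" unfolding dep_def by blast
  have "dep n V0 t" unfolding dep_def
  proof (intro exI[of _ c] conjI allI impI ballI)
    show "c t \<noteq> 0" by fact
  next
    fix s assume s: "s \<subseteq> {1..n}" "setlex_gt s t"
    then have "s \<subseteq> {1..Suc n}" by auto
    then show "c s = 0" using c(2) s(2) by blast
  next
    fix B assume "B \<in> V0" then show "(\<Sum>s\<in>Pow B. c s) = 0" using c(3) V0def by auto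
  qed
  moreover have "dep n V1 t" unfolding dep_def
  proof (intro exI[of _ "\<lambda>s. c s + c (insert ?m s)"] conjI allI impI ballI)
    have "insert ?m t \<subseteq> {1..Suc n}" "setlex_gt (insert ?m t) t" using t setlex_L1[OF t t] by auto
    then have "c (insert ?m t) = 0" using c(2) by blast
    then show "c t + c (insert ?m t) \<noteq> 0" using c(1) by simp
  next
    fix s assume s: "s \<subseteq> {1..n}" "setlex_gt s t"
    have s1: "s \<subseteq> {1..Suc n}" "insert ?m s \<subseteq> {1..Suc n}" using s by auto
    have "c s = 0" using c(2)[OF s1(1)] s by blast
    moreover have "c (insert ?m s) = 0" using c(2)[OF s1(2)] s setlex_L1[OF s(1) t] by blast
    ultimately show "c s + c (insert ?m s) = 0" by simp
  next
    fix B' assume "B' \<in> V1"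
    then obtain B where B: "B \<in> V" "?m \<in> B" "B' = B - {?m}" using V1def by blast
    have "B \<subseteq> {1..Suc n}" using B V by auto
    then show "(\<Sum>s\<in>Pow B'. c s + c (insert ?m s)) = 0" using sumPow_split[of B n c] B c(3) by simp
  qed
  ultimately show "dep n V0 t \<and> dep n V1 t" ..
next
  let ?m = "Suc n"
  assume H: "dep n V0 t \<and> dep n V1 t"
  obtain c0 :: "nat set \<Rightarrow> real" where
    c0: "c0 t \<noteq> 0" "\<And>s. s \<subseteq> {1..n} \<Longrightarrow> setlex_gt s t \<Longrightarrow> c0 s = 0" "\<And>B. B \<in> V0 \<Longrightarrow> (\<Sum>s\<in>Pow B. c0 s) = 0"
    using conjunct1[OF H] unfolding dep_def by blast
  obtain c1 :: "nat set \<Rightarrow> real" where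
    c1: "c1 t \<noteq> 0" "\<And>s. s \<subseteq> {1..n} \<Longrightarrow> setlex_gt s t \<Longrightarrow> c1 s = 0" "\<And>B. B \<in> V1 \<Longrightarrow> (\<Sum>s\<in>Pow B. c1 s) = 0"
    using conjunct2[OF H] unfolding dep_def by blast
  define k where "k = c0 t / c1 t"
  define c where "c s = (if ?m \<in> s then k * c1 (s - {?m}) - c0 (s - {?m}) else c0 s)" for s
  show "dep (Suc n) V t" unfolding dep_def
  proof (intro exI[of _ c] conjI allI impI ballI)
    show "c t \<noteq> 0" unfolding c_def using t c0(1) by auto
  next
    fix s assume s: "s \<subseteq> {1..Suc n}" "setlex_gt s t"
    show "c s = 0"
    proof (cases "?m \<in> s")
      case False
      then have "s \<subseteq> {1..n}" using s by (auto simp: subset_iff le_Suc_eq)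
      then show ?thesis unfolding c_def using False c0(2) s by simp
    next
      case True
      define s' where "s' = s - {?m}"
      have s's: "s = insert ?m s'" "s' \<subseteq> {1..n}" using True s unfolding s'_def by (auto simp: subset_iff le_Suc_eq)
      have "setlex_gt s' t \<or> s' = t" using setlex_L1[OF s's(2) t] s(2) s's(1) by simp
      then show ?thesis
      proof
        assume "setlex_gt s' t"
        then show ?thesis unfolding c_def using True c0(2) c1(2) s's(2) s'_def[symmetric] by simp
      next
        assume "s' = t"
        then show ?thesis unfolding c_def k_def using True c1(1) s'_def[symmetric] by simp
      qed
    qed
  next
    fix B assume B: "B \<in> V"
    have BV: "B \<subseteq> {1..Suc n}" using B V by auto
    show "(\<Sum>s\<in>Pow B. c s) = 0"
    proof (cases "?m \<in> B")
      case False
      have "(\<Sum>s\<in>Pow B. c s) = (\<Sum>s\<in>Pow B. c0 s)" unfolding c_def using False by (intro sum.cong) auto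
      also have "\<dots> = 0" using c0(3) B False V0def by simp
      finally show ?thesis .
    next
      case True
      have "(\<Sum>s\<in>Pow B. c s) = (\<Sum>s\<in>Pow (B - {?m}). c s + c (insert ?m s))" by (rule sumPow_split[OF BV True])
      also have "\<dots> = (\<Sum>s\<in>Pow (B - {?m}). k * c1 s)"
      proof (rule sum.cong[OF refl])
        fix s assume "s \<in> Pow (B - {?m})"
        then have "?m \<notin> s" by auto
        then show "c s + c (insert ?m s) = k * c1 s" unfolding c_def by simp
      qed
      also have "\<dots> = k * (\<Sum>s\<in>Pow (B - {?m}). c1 s)" by (simp add: sum_distrib_left)
      also have "(\<Sum>s\<in>Pow (B - {?m}). c1 s) = 0" using c1(3) B True V1def by blast
      finally show ?thesis by simp
    qed
  qed
qed

lemma dep_step_in: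
  assumes V: "V \<subseteq> Pow {1..Suc n}" and t: "t \<subseteq> {1..n}"
    and V0def: "V0 = {B\<in>V. Suc n \<notin> B}" and V1def: "V1 = (\<lambda>B. B - {Suc n}) ` {B\<in>V. Suc n \<in> B}"
  shows "dep (Suc n) V (insert (Suc n) t) \<longleftrightarrow> dep n V0 t \<or> dep n V1 t"
proof
  let ?m = "Suc n"
  have mt: "?m \<notin> t" using t by auto
  have ft: "finite t" using t finite_sub by blast
  assume "dep (Suc n) V (insert ?m t)"
  then obtain c :: "nat set \<Rightarrow> real" where c: "c (insert ?m t) \<noteq> 0" "\<And>s. s \<subseteq> {1..Suc n} \<Longrightarrow> setlex_gt s (insert ?m t) \<Longrightarrow> c s = 0"
    "\<And>B. B \<in> V \<Longrightarrow> (\<Sum>s\<in>Pow B. c s) = 0" unfolding dep_def by blast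
  show "dep n V0 t \<or> dep n V1 t"
  proof (cases "c t = 0")
    case False
    have "dep n V0 t" unfolding dep_def
    proof (intro exI[of _ c] conjI allI impI ballI)
      show "c t \<noteq> 0" by fact
    next
      fix s assume s: "s \<subseteq> {1..n}" "setlex_gt s t"
      then have "setlex_gt s (insert ?m t)" using setlex_L2[OF s(1) t] by simp
      moreover have "s \<subseteq> {1..Suc n}" using s by auto
      ultimately show "c s = 0" using c(2) by blast
    next
      fix B assume "B \<in> V0" then show "(\<Sum>s\<in>Pow B. c s) = 0" using c(3) V0def by auto
    qed
    then show ?thesis ..
  next
    case True
    have "dep n V1 t" unfolding dep_def
    proof (intro exI[of _ "\<lambda>s. c s + c (insert ?m s)"] conjI allI impI ballI)
      show "c t + c (insert ?m t) \<noteq> 0" using True c(1) by simp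
    next
      fix s assume s: "s \<subseteq> {1..n}" "setlex_gt s t"
      have ms: "?m \<notin> s" using s by auto
      have s1: "s \<subseteq> {1..Suc n}" "insert ?m s \<subseteq> {1..Suc n}" using s by auto
      have "c s = 0" using c(2)[OF s1(1)] s setlex_L2[OF s(1) t] by blast
      moreover have "c (insert ?m s) = 0" using c(2)[OF s1(2)] s setlex_L3[OF ms mt finite_sub[OF s(1)] ft] by blast
      ultimately show "c s + c (insert ?m s) = 0" by simp
    next
      fix B' assume "B' \<in> V1"
      then obtain B where B: "B \<in> V" "?m \<in> B" "B' = B - {?m}" using V1def by blast
      have "B \<subseteq> {1..Suc n}" using B V by auto
      then show "(\<Sum>s\<in>Pow B'. c s + c (insert ?m s)) = 0" using sumPow_split[of B n c] B c(3) by simp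
    qed
    then show ?thesis ..
  qed
next
  let ?m = "Suc n"
  have mt: "?m \<notin> t" using t by auto
  have ft: "finite t" using t finite_sub by blast
  assume "dep n V0 t \<or> dep n V1 t"
  then show "dep (Suc n) V (insert ?m t)"
  proof
    assume "dep n V0 t"
    then obtain c0 :: "nat set \<Rightarrow> real" where
      c0: "c0 t \<noteq> 0" "\<And>s. s \<subseteq> {1..n} \<Longrightarrow> setlex_gt s t \<Longrightarrow> c0 s = 0" "\<And>B. B \<in> V0 \<Longrightarrow> (\<Sum>s\<in>Pow B. c0 s) = 0"
      unfolding dep_def by blast
    define c where "c s = (if ?m \<in> s then - c0 (s - {?m}) else c0 s)" for s
    show ?thesis unfolding dep_def
    proof (intro exI[of _ c] conjI allI impI ballI)
      show "c (insert ?m t) \<noteq> 0" unfolding c_def using c0(1) mt by simp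
    next
      fix s assume s: "s \<subseteq> {1..Suc n}" "setlex_gt s (insert ?m t)"
      show "c s = 0"
      proof (cases "?m \<in> s")
        case False
        then have s1: "s \<subseteq> {1..n}" using s by (auto simp: subset_iff le_Suc_eq)
        then have "setlex_gt s t" using setlex_L2[OF s1 t] s(2) by simp
        then show ?thesis unfolding c_def using False c0(2) s1 by simp
      next
        case True
        define s' where "s' = s - {?m}"
        have s's: "s = insert ?m s'" "s' \<subseteq> {1..n}" "?m \<notin> s'" using True s unfolding s'_def by (auto simp: subset_iff le_Suc_eq)
        have "setlex_gt s' t" using setlex_L3[OF s's(3) mt finite_sub[OF s's(2)] ft] s(2) s's(1) by simp
        then show ?thesis unfolding c_def using True c0(2) s's(2) s'_def[symmetric] by simp
      qed
    next
      fix B assume B: "B \<in> V"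
      have BV: "B \<subseteq> {1..Suc n}" using B V by auto
      show "(\<Sum>s\<in>Pow B. c s) = 0"
      proof (cases "?m \<in> B")
        case False
        have "(\<Sum>s\<in>Pow B. c s) = (\<Sum>s\<in>Pow B. c0 s)" unfolding c_def using False by (intro sum.cong) auto
        also have "\<dots> = 0" using c0(3) B False V0def by simp
        finally show ?thesis .
      next
        case True
        have "(\<Sum>s\<in>Pow B. c s) = (\<Sum>s\<in>Pow (B - {?m}). c s + c (insert ?m s))" by (rule sumPow_split[OF BV True])
        also have "\<dots> = (\<Sum>s\<in>Pow (B - {?m}). 0)"
        proof (rule sum.cong[OF refl])
          fix s assume "s \<in> Pow (B - {?m})"
          then have "?m \<notin> s" by auto
          then show "c s + c (insert ?m s) = 0" unfolding c_def by simp
        qed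
        finally show ?thesis by simp
      qed
    qed
  next
    assume "dep n V1 t"
    then obtain c1 :: "nat set \<Rightarrow> real" where
      c1: "c1 t \<noteq> 0" "\<And>s. s \<subseteq> {1..n} \<Longrightarrow> setlex_gt s t \<Longrightarrow> c1 s = 0" "\<And>B. B \<in> V1 \<Longrightarrow> (\<Sum>s\<in>Pow B. c1 s) = 0"
      unfolding dep_def by blast
    define c where "c s = (if ?m \<in> s then c1 (s - {?m}) else 0)" for s
    show ?thesis unfolding dep_def
    proof (intro exI[of _ c] conjI allI impI ballI)
      show "c (insert ?m t) \<noteq> 0" unfolding c_def using c1(1) mt by simp
    next
      fix s assume s: "s \<subseteq> {1..Suc n}" "setlex_gt s (insert ?m t)"
      show "c s = 0"
      proof (cases "?m \<in> s")
        case False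
        then show ?thesis unfolding c_def by simp
      next
        case True
        define s' where "s' = s - {?m}"
        have s's: "s = insert ?m s'" "s' \<subseteq> {1..n}" "?m \<notin> s'" using True s unfolding s'_def by (auto simp: subset_iff le_Suc_eq)
        have "setlex_gt s' t" using setlex_L3[OF s's(3) mt finite_sub[OF s's(2)] ft] s(2) s's(1) by simp
        then show ?thesis unfolding c_def using True c1(2) s's(2) s'_def[symmetric] by simp
      qed
    next
      fix B assume B: "B \<in> V"
      have BV: "B \<subseteq> {1..Suc n}" using B V by auto
      show "(\<Sum>s\<in>Pow B. c s) = 0"
      proof (cases "?m \<in> B")
        case False
        have "(\<Sum>s\<in>Pow B. c s) = (\<Sum>s\<in>Pow B. 0)" unfolding c_def using False by (intro sum.cong) auto
        then show ?thesis by simp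
      next
        case True
        have "(\<Sum>s\<in>Pow B. c s) = (\<Sum>s\<in>Pow (B - {?m}). c s + c (insert ?m s))" by (rule sumPow_split[OF BV True])
        also have "\<dots> = (\<Sum>s\<in>Pow (B - {?m}). c1 s)"
        proof (rule sum.cong[OF refl])
          fix s assume "s \<in> Pow (B - {?m})"
          then have "?m \<notin> s" by auto
          then show "c s + c (insert ?m s) = c1 s" unfolding c_def by simp
        qed
        also have "\<dots> = 0" using c1(3) B True V1def by blast
        finally show ?thesis .
      qed
    qed
  qed
qed


lemma dep_win: "V \<subseteq> Pow {1..n} \<Longrightarrow> dep n V (t \<inter> {1..n}) \<longleftrightarrow> \<not> win n V t"
proof (induction n arbitrary: V t)
  case 0
  have t0: "t \<inter> {1..0::nat} = {}" by auto
  have VV: "V \<subseteq> {{}}" using 0 by auto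
  show ?case
  proof
    assume "dep 0 V (t \<inter> {1..0})"
    then obtain c :: "nat set \<Rightarrow> real" where c: "c {} \<noteq> 0" "\<forall>B\<in>V. (\<Sum>s\<in>Pow B. c s) = 0"
      unfolding dep_def t0 by blast
    have "V = {}"
    proof (rule ccontr)
      assume "V \<noteq> {}"
      then have "{} \<in> V" using VV by auto
      then show False using c by auto
    qed
    then show "\<not> win 0 V t" by simp
  next
    assume "\<not> win 0 V t"
    then have "V = {}" by simp
    then show "dep 0 V (t \<inter> {1..0})" unfolding dep_def t0
      by (intro exI[of _ "\<lambda>_. 1"]) (auto simp: setlex_gt_irrefl)
  qed
next
  case (Suc n)
  define V0 where "V0 = {B\<in>V. Suc n \<notin> B}"
  define V1 where "V1 = (\<lambda>B. B - {Suc n}) ` {B\<in>V. Suc n \<in> B}"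
  have V0s: "V0 \<subseteq> Pow {1..n}" unfolding V0_def using V0_sub[OF Suc.prems] .
  have V1s: "V1 \<subseteq> Pow {1..n}" unfolding V1_def using V1_sub[OF Suc.prems] .
  have ih0: "dep n V0 (t \<inter> {1..n}) \<longleftrightarrow> \<not> win n V0 t" using Suc.IH[OF V0s] .
  have ih1: "dep n V1 (t \<inter> {1..n}) \<longleftrightarrow> \<not> win n V1 t" using Suc.IH[OF V1s] .
  have ts: "t \<inter> {1..n} \<subseteq> {1..n}" by auto
  have w: "win (Suc n) V t = (if Suc n \<in> t then win n V0 t \<and> win n V1 t else win n V0 t \<or> win n V1 t)"
    unfolding V0_def V1_def by simp
  show ?case
  proof (cases "Suc n \<in> t")
    case True
    then have "t \<inter> {1..Suc n} = insert (Suc n) (t \<inter> {1..n})" by (auto simp: le_Suc_eq)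
    then show ?thesis using dep_step_in[OF Suc.prems ts V0_def V1_def] ih0 ih1 w True by simp
  next
    case False
    then have "t \<inter> {1..Suc n} = t \<inter> {1..n}" by (auto simp: le_Suc_eq)
    then show ?thesis using dep_step_notin[OF Suc.prems ts V0_def V1_def] ih0 ih1 w False by simp
  qed
qed

definition Wset :: "nat \<Rightarrow> nat set set \<Rightarrow> nat set set" where
  "Wset n V = {t. t \<subseteq> {1..n} \<and> win n V t}"

lemma finite_Wset: "finite (Wset n V)"
  unfolding Wset_def by (rule finite_subset[of _ "Pow {1..n}"]) auto

lemma card_Wset: "V \<subseteq> Pow {1..n} \<Longrightarrow> card (Wset n V) = card V"
proof (induction n arbitrary: V)
  case 0
  then have VV: "V \<subseteq> {{}}" by auto
  show ?case
  proof (cases "V = {}")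
    case True then show ?thesis by (simp add: Wset_def)
  next
    case False
    then have "V = {{}}" using VV by auto
    moreover have "Wset 0 {{}} = {{}}" unfolding Wset_def by auto
    ultimately show ?thesis by simp
  qed
next
  case (Suc n)
  let ?m = "Suc n"
  define V0 where "V0 = {B\<in>V. ?m \<notin> B}"
  define V1 where "V1 = (\<lambda>B. B - {?m}) ` {B\<in>V. ?m \<in> B}"
  have V0s: "V0 \<subseteq> Pow {1..n}" unfolding V0_def using V0_sub[OF Suc.prems] .
  have V1s: "V1 \<subseteq> Pow {1..n}" unfolding V1_def using V1_sub[OF Suc.prems] .
  have finV: "finite V" using Suc.prems finite_subset by (metis finite_Pow_iff finite_atLeastAtMost)
  let ?A = "Wset n V0 \<union> Wset n V1"
  let ?B = "insert ?m ` (Wset n V0 \<inter> Wset n V1)"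
  have eq: "Wset ?m V = ?A \<union> ?B"
  proof (intro set_eqI iffI)
    fix t assume "t \<in> Wset ?m V"
    then have t: "t \<subseteq> {1..?m}" "win ?m V t" unfolding Wset_def by auto
    show "t \<in> ?A \<union> ?B"
    proof (cases "?m \<in> t")
      case False
      then have "t \<subseteq> {1..n}" using t by (auto simp: subset_iff le_Suc_eq)
      moreover have "win n V0 t \<or> win n V1 t" using t(2) False unfolding V0_def V1_def by simp
      ultimately show ?thesis unfolding Wset_def by auto
    next
      case True
      define t' where "t' = t - {?m}"
      have t': "t' \<subseteq> {1..n}" "t = insert ?m t'" using t True unfolding t'_def by (auto simp: subset_iff le_Suc_eq)
      have c: "\<And>W. win n W t = win n W t'" by (rule win_cong) (auto simp: t'_def)
      have "win n V0 t \<and> win n V1 t" using t(2) True unfolding V0_def V1_def by simp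
      then have "t' \<in> Wset n V0 \<inter> Wset n V1" using t'(1) c unfolding Wset_def by auto
      then show ?thesis using t'(2) by blast
    qed
  next
    fix t assume "t \<in> ?A \<union> ?B"
    then show "t \<in> Wset ?m V"
    proof
      assume tA: "t \<in> ?A"
      then have ts: "t \<subseteq> {1..n}" unfolding Wset_def by auto
      then have "?m \<notin> t" by auto
      moreover have "win n V0 t \<or> win n V1 t" using tA unfolding Wset_def by auto
      ultimately have "win ?m V t" unfolding V0_def V1_def by simp
      then show ?thesis using ts unfolding Wset_def by auto
    next
      assume "t \<in> ?B"
      then obtain t' where t': "t' \<in> Wset n V0 \<inter> Wset n V1" "t = insert ?m t'" by blast
      have ts: "t' \<subseteq> {1..n}" using t' unfolding Wset_def by auto
      have c: "\<And>W. win n W t = win n W t'" by (rule win_cong) (use t'(2) in auto)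
      have "win n V0 t \<and> win n V1 t" using t' c unfolding Wset_def by auto
      then have "win ?m V t" using t'(2) unfolding V0_def V1_def by simp
      moreover have "t \<subseteq> {1..?m}" using ts t'(2) by auto
      ultimately show ?thesis unfolding Wset_def by auto
    qed
  qed
  have disj: "?A \<inter> ?B = {}" unfolding Wset_def by auto
  have inj1: "inj_on (insert ?m) (Wset n V0 \<inter> Wset n V1)"
  proof (rule inj_onI)
    fix x y assume "x \<in> Wset n V0 \<inter> Wset n V1" "y \<in> Wset n V0 \<inter> Wset n V1" "insert ?m x = insert ?m y"
    then have "?m \<notin> x" "?m \<notin> y" unfolding Wset_def by auto
    then show "x = y" using \<open>insert ?m x = insert ?m y\<close> by (metis insert_ident)
  qed
  have "card (Wset ?m V) = card ?A + card ?B"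
    unfolding eq by (rule card_Un_disjoint) (auto simp: finite_Wset disj)
  also have "card ?B = card (Wset n V0 \<inter> Wset n V1)" using inj1 by (rule card_image)
  also have "card ?A + card (Wset n V0 \<inter> Wset n V1) = card (Wset n V0) + card (Wset n V1)"
    by (rule card_Un_Int[symmetric]) (auto simp: finite_Wset)
  also have "\<dots> = card V0 + card V1" using Suc.IH[OF V0s] Suc.IH[OF V1s] by simp
  also have "card V1 = card {B\<in>V. ?m \<in> B}"
    unfolding V1_def
  proof (rule card_image, rule inj_onI)
    fix x y assume "x \<in> {B\<in>V. ?m \<in> B}" "y \<in> {B\<in>V. ?m \<in> B}" "x - {?m} = y - {?m}"
    then show "x = y" by (metis CollectD insert_Diff)
  qed
  also have "card V0 + card {B\<in>V. ?m \<in> B} = card V"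
  proof -
    have "V = V0 \<union> {B\<in>V. ?m \<in> B}" "V0 \<inter> {B\<in>V. ?m \<in> B} = {}" unfolding V0_def by auto
    then show ?thesis using finV by (metis card_Un_disjoint finite_Un)
  qed
  finally show ?case .
qed

lemma S_lex_Wset:
  assumes V: "V \<subseteq> Pow {1..n}" and ne: "V \<noteq> {}"
  shows "S_lex ({1..n}, V) = Wset n V"
proof (cases "n = 0")
  case True
  then show ?thesis using ne unfolding S_lex_def ground_def Wset_def by auto
next
  case False
  then have "S_lex ({1..n}, V) = {t. t \<subseteq> {1..n} \<and> \<not> dep n V t}" using S_lex_dep[OF V] by simp
  also have "\<dots> = Wset n V"
  proof -
    have "\<And>t. t \<subseteq> {1..n} \<Longrightarrow> dep n V t \<longleftrightarrow> \<not> win n V t"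
      using dep_win[OF V] by (metis inf.absorb_iff1)
    then show ?thesis unfolding Wset_def by auto
  qed
  finally show ?thesis .
qed


abbreviation ce :: "bool list \<Rightarrow> nat \<Rightarrow> nat" where "ce C k \<equiv> cnt_e (take k C)"
abbreviation cn :: "bool list \<Rightarrow> nat \<Rightarrow> nat" where "cn C k \<equiv> cnt_n (take k C)"

lemma cnt_e_Nil[simp]: "cnt_e [] = 0" by (simp add: cnt_e_def)
lemma cnt_n_Nil[simp]: "cnt_n [] = 0" by (simp add: cnt_n_def)
lemma cnt_e_Cons[simp]: "cnt_e (x # xs) = (if x then 1 else 0) + cnt_e xs" by (simp add: cnt_e_def)
lemma cnt_n_Cons[simp]: "cnt_n (x # xs) = (if x then 0 else 1) + cnt_n xs" by (simp add: cnt_n_def)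
lemma cnt_e_append[simp]: "cnt_e (xs @ ys) = cnt_e xs + cnt_e ys" by (simp add: cnt_e_def)
lemma cnt_n_append[simp]: "cnt_n (xs @ ys) = cnt_n xs + cnt_n ys" by (simp add: cnt_n_def)
lemma cnt_e_n: "cnt_e xs + cnt_n xs = length xs" by (induction xs) auto
lemma cnt_e_le: "cnt_e xs \<le> length xs" using cnt_e_n[of xs] by simp

lemma ce_Suc: "k < length C \<Longrightarrow> ce C (Suc k) = ce C k + (if C ! k then 1 else 0)"
  by (simp add: take_Suc_conv_app_nth)
lemma cn_Suc: "k < length C \<Longrightarrow> cn C (Suc k) = cn C k + (if C ! k then 0 else 1)"
  by (simp add: take_Suc_conv_app_nth)
lemma ce_cn: "k \<le> length C \<Longrightarrow> ce C k + cn C k = k"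
  using cnt_e_n[of "take k C"] by simp
lemma ce_0[simp]: "ce C 0 = 0" by simp
lemma ce_full: "length C \<le> k \<Longrightarrow> ce C k = cnt_e C" by simp

lemma ce_mono: "j \<le> k \<Longrightarrow> ce C j \<le> ce C k"
proof -
  assume "j \<le> k"
  then have "take k C = take j C @ take (k - j) (drop j C)"
    by (metis le_add_diff_inverse take_add)
  then show ?thesis by simp
qed
lemma cn_mono: "j \<le> k \<Longrightarrow> cn C j \<le> cn C k"
proof -
  assume "j \<le> k"
  then have "take k C = take j C @ take (k - j) (drop j C)"
    by (metis le_add_diff_inverse take_add)
  then show ?thesis by (simp add: cnt_n_def)
qed

lemma ce_Suc_le: "ce C (Suc k) \<le> Suc (ce C k)"
  by (cases "k < length C") (auto simp: ce_Suc)

lemma ce_diff_le: "j \<le> k \<Longrightarrow> ce C k \<le> ce C j + (k - j)"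
proof (induction k)
  case 0 then show ?case by simp
next
  case (Suc k)
  show ?case
  proof (cases "j \<le> k")
    case True then show ?thesis using Suc ce_Suc_le[of k C] by simp
  next
    case False then have "j = Suc k" using Suc by simp
    then show ?thesis by simp
  qed
qed

definition epos :: "bool list \<Rightarrow> nat \<Rightarrow> nat" where
  "epos C a = (LEAST p. p < length C \<and> C ! p \<and> ce C p = a)"

lemma epos_exists:
  assumes "a < cnt_e C"
  shows "\<exists>p. p < length C \<and> C ! p \<and> ce C p = a"
proof -
  have ex: "\<exists>p. a < ce C (Suc p)" using assms by (intro exI[of _ "length C"]) simp
  define p where "p = (LEAST p. a < ce C (Suc p))"
  have p1: "a < ce C (Suc p)" unfolding p_def using ex by (rule LeastI_ex)
  have p2: "ce C p \<le> a"
  proof (cases p)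
    case 0 then show ?thesis by simp
  next
    case (Suc q)
    then have "\<not> a < ce C (Suc q)" unfolding p_def using not_less_Least
      by (metis Suc lessI p_def)
    then show ?thesis using Suc by simp
  qed
  have pl: "p < length C"
  proof (rule ccontr)
    assume "\<not> p < length C"
    then have "ce C (Suc p) = ce C p" by simp
    then show False using p1 p2 by simp
  qed
  have "ce C (Suc p) = ce C p + (if C ! p then 1 else 0)" using pl by (rule ce_Suc)
  then have "C ! p" "ce C p = a" using p1 p2 by (auto split: if_splits)
  then show ?thesis using pl by blast
qed

lemma epos_unique_aux:
  assumes "p < q" "q \<le> length C" "C ! p"
  shows "ce C p < ce C q"
proof -
  have "ce C (Suc p) = ce C p + 1" using assms ce_Suc[of p C] by simp
  moreover have "ce C (Suc p) \<le> ce C q" using assms by (intro ce_mono) simp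
  ultimately show ?thesis by simp
qed

lemma epos_props:
  assumes "a < cnt_e C"
  shows "epos C a < length C" "C ! (epos C a)" "ce C (epos C a) = a"
  using LeastI_ex[OF epos_exists[OF assms]] unfolding epos_def by auto

lemma epos_unique:
  assumes "p < length C" "C ! p" "ce C p = a"
  shows "epos C a = p"
proof -
  have a: "a < cnt_e C"
  proof -
    have "ce C (Suc p) = a + 1" using assms ce_Suc[of p C] by simp
    moreover have "ce C (Suc p) \<le> cnt_e C" using ce_mono[of "Suc p" "length C" C] assms by simp
    ultimately show ?thesis by simp
  qed
  note e = epos_props[OF a]
  show ?thesis
  proof (rule ccontr)
    assume "epos C a \<noteq> p"
    then consider "epos C a < p" | "p < epos C a" by linarith
    then show False
    proof cases
      case 1 then show False using epos_unique_aux[OF 1 _ e(2)] assms e by simp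
    next
      case 2 then show False using epos_unique_aux[OF 2 _ assms(2)] assms e by simp
    qed
  qed
qed

lemma ce_epos_Suc: "a < cnt_e C \<Longrightarrow> ce C (Suc (epos C a)) = Suc a"
  using epos_props[of a C] ce_Suc[of "epos C a" C] by simp

lemma epos_lt_iff:
  assumes "a < cnt_e C"
  shows "epos C a < q \<longleftrightarrow> a < ce C q"
proof
  assume "epos C a < q"
  then have "ce C (Suc (epos C a)) \<le> ce C q" by (intro ce_mono) simp
  then show "a < ce C q" using ce_epos_Suc[OF assms] by simp
next
  assume "a < ce C q"
  show "epos C a < q"
  proof (rule ccontr)
    assume "\<not> epos C a < q"
    then have "ce C q \<le> ce C (epos C a)" by (intro ce_mono) simp
    then show False using \<open>a < ce C q\<close> epos_props(3)[OF assms] by simp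
  qed
qed

lemma epos_mono:
  assumes "a < b" "b < cnt_e C"
  shows "epos C a < epos C b"
proof -
  have "a < ce C (epos C b)" using epos_props(3)[OF assms(2)] assms(1) by simp
  then show ?thesis using epos_lt_iff[of a C] assms by simp
qed

lemma Es_iff: "i \<in> Es C \<longleftrightarrow> (\<exists>a<cnt_e C. i = Suc (epos C a))"
proof
  assume "i \<in> Es C"
  then have i: "1 \<le> i" "i \<le> length C" "C ! (i - 1)" unfolding Es_def by auto
  define a where "a = ce C (i - 1)"
  have "ce C i = Suc a" using ce_Suc[of "i - 1" C] i unfolding a_def by simp
  then have al: "a < cnt_e C" using ce_mono[of i "length C" C] i by simp
  have "epos C a = i - 1" using i unfolding a_def by (intro epos_unique) auto
  then show "\<exists>a<cnt_e C. i = Suc (epos C a)" using al i by (intro exI[of _ a]) auto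
next
  assume "\<exists>a<cnt_e C. i = Suc (epos C a)"
  then obtain a where a: "a < cnt_e C" "i = Suc (epos C a)" by blast
  then show "i \<in> Es C" unfolding Es_def using epos_props[OF a(1)] by auto
qed

lemma Es_sub: "Es C \<subseteq> {1..length C}" unfolding Es_def by auto

lemma Es_inj:
  assumes "length C = length C'" "Es C = Es C'"
  shows "C = C'"
proof (rule nth_equalityI)
  show "length C = length C'" by fact
  fix i assume "i < length C"
  then have "C ! i \<longleftrightarrow> Suc i \<in> Es C" "C' ! i \<longleftrightarrow> Suc i \<in> Es C'" using assms(1) unfolding Es_def by auto
  then show "C ! i = C' ! i" using assms(2) by simp
qed

lemma Es_snoc: "Es (C @ [x]) = Es C \<union> (if x then {Suc (length C)} else {})"
  unfolding Es_def by (auto simp: nth_append le_Suc_eq)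


definition hC :: "bool list \<Rightarrow> nat \<Rightarrow> nat" where "hC C a = cn C (epos C a)"
definition kD :: "bool list \<Rightarrow> bool list \<Rightarrow> nat \<Rightarrow> nat" where "kD C L a = cn C (epos L a)"

definition dnext :: "bool list \<Rightarrow> bool list \<Rightarrow> nat \<times> nat \<Rightarrow> nat \<times> nat" where
  "dnext C L p = (case p of (a, b) \<Rightarrow>
     if a = cnt_e C then (a, b + 1) else if hC C a \<le> b then (a + 1, b)
     else if b < kD C L a then (a, b + 1) else (a + 1, b + 1))"

lemma seg_mem: "(x, y) \<in> seg p q \<longleftrightarrow> (\<exists>t. 0 \<le> t \<and> t \<le> 1 \<and> x = real (fst p) + t * (real (fst q) - real (fst p))
   \<and> y = real (snd p) + t * (real (snd q) - real (snd p)))"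
  unfolding seg_def by auto

lemma vtx_Suc: "k < length C \<Longrightarrow> vtx C (Suc k) = (ce C k + (if C ! k then 1 else 0), cn C k + (if C ! k then 0 else 1))"
  unfolding vtx_def using ce_Suc cn_Suc by simp

lemma realC_mem: "(x, y) \<in> realC C \<longleftrightarrow> (\<exists>k<length C. (x, y) \<in> seg (vtx C k) (vtx C (Suc k)))"
  unfolding realC_def by auto

lemma realD_mem: "(x, y) \<in> realD C L \<longleftrightarrow> (\<exists>k<length C. (x, y) \<in> seg (dvtx C L k) (dvtx C L (Suc k)))"
  unfolding realD_def by auto

lemma dvtx_eq: "length L = length C \<Longrightarrow> k \<le> length C \<Longrightarrow> dvtx C L k = (ce L k, cn C k)"
proof (induction k)
  case 0 then show ?case by (simp add: dvtx_def)
next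
  case (Suc k)
  then have k: "k < length C" by simp
  have "dvtx C L (Suc k) = (fst (dvtx C L k) + fst (dstep (C ! k) (L ! k)), snd (dvtx C L k) + snd (dstep (C ! k) (L ! k)))"
    unfolding dvtx_def by simp
  also have "\<dots> = (ce L k + fst (dstep (C ! k) (L ! k)), cn C k + snd (dstep (C ! k) (L ! k)))"
    using Suc by simp
  also have "\<dots> = (ce L (Suc k), cn C (Suc k))"
    using ce_Suc[of k L] cn_Suc[of k C] k Suc.prems by (simp add: dstep_def)
  finally show ?case .
qed

lemma G1:
  assumes "a < cnt_e C" "0 \<le> t" "t \<le> 1"
  shows "(real a + t, real (hC C a)) \<in> realC C"
proof -
  note e = epos_props[OF assms(1)]
  have "vtx C (epos C a) = (a, hC C a)" unfolding vtx_def hC_def using e by simp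
  moreover have "vtx C (Suc (epos C a)) = (Suc a, hC C a)" using vtx_Suc[OF e(1)] e unfolding hC_def by simp
  ultimately have "(real a + t, real (hC C a)) \<in> seg (vtx C (epos C a)) (vtx C (Suc (epos C a)))"
    unfolding seg_mem using assms by (intro exI[of _ t]) auto
  then show ?thesis unfolding realC_mem using e(1) by blast
qed

lemma half_nat: "real (m::nat) \<noteq> real a + 1/2"
proof
  assume "real m = real a + 1/2"
  then have "2 * real m = 2 * real a + 1" by simp
  then have "real (2 * m) = real (2 * a + 1)" by simp
  then have "2 * m = 2 * a + 1" using of_nat_eq_iff by blast
  then show False by presburger
qed

lemma G2:
  assumes "(real a + 1/2, y) \<in> realC C"
  shows "a < cnt_e C \<and> y = real (hC C a)"
proof -
  obtain k t where k: "k < length C" "0 \<le> t" "t \<le> 1"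
    "real a + 1/2 = real (fst (vtx C k)) + t * (real (fst (vtx C (Suc k))) - real (fst (vtx C k)))"
    "y = real (snd (vtx C k)) + t * (real (snd (vtx C (Suc k))) - real (snd (vtx C k)))"
    using assms unfolding realC_mem seg_mem by blast
  show ?thesis
  proof (cases "C ! k")
    case False
    then have "real a + 1/2 = real (ce C k)" using k(4) vtx_Suc[OF k(1)] by (simp add: vtx_def)
    then show ?thesis using half_nat by metis
  next
    case True
    then have x: "real a + 1/2 = real (ce C k) + t" and yy: "y = real (cn C k)"
      using k(4,5) vtx_Suc[OF k(1)] by (auto simp: vtx_def)
    have "real (ce C k) \<le> real a + 1/2" "real a + 1/2 \<le> real (ce C k) + 1" using x k by auto
    then have "ce C k \<le> a" "a \<le> ce C k" by linarith+
    then have ce: "ce C k = a" by simp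
    have ep: "epos C a = k" using k(1) True ce by (rule epos_unique)
    have "a < cnt_e C"
    proof -
      have "ce C (Suc k) = Suc a" using ce_Suc[OF k(1)] True ce by simp
      then show ?thesis using ce_mono[of "Suc k" "length C" C] k(1) by simp
    qed
    then show ?thesis using yy ep unfolding hC_def by simp
  qed
qed

definition ddelta :: "bool list \<Rightarrow> bool list \<Rightarrow> nat \<Rightarrow> real" where
  "ddelta C L a = (if C ! epos L a then 0 else 1)"

lemma G3:
  assumes "length L = length C" "a < cnt_e L" "0 \<le> t" "t \<le> 1"
  shows "(real a + t, real (kD C L a) + t * ddelta C L a) \<in> realD C L"
proof -
  note e = epos_props[OF assms(2)]
  have q: "epos L a < length C" using e assms by simp
  have "dvtx C L (epos L a) = (a, kD C L a)" using dvtx_eq[OF assms(1)] q e unfolding kD_def by simp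
  moreover have "dvtx C L (Suc (epos L a)) = (Suc a, kD C L a + (if C ! epos L a then 0 else 1))"
    using dvtx_eq[OF assms(1), of "Suc (epos L a)"] q ce_epos_Suc[OF assms(2)] cn_Suc[OF q] unfolding kD_def by simp
  ultimately have "(real a + t, real (kD C L a) + t * ddelta C L a) \<in> seg (dvtx C L (epos L a)) (dvtx C L (Suc (epos L a)))"
    unfolding seg_mem ddelta_def using assms by (intro exI[of _ t]) auto
  then show ?thesis unfolding realD_mem using q by blast
qed

lemma G4:
  assumes "length L = length C" "(real a + 1/2, y) \<in> realD C L"
  shows "a < cnt_e L \<and> y = real (kD C L a) + 1/2 * ddelta C L a"
proof -
  obtain k t where k: "k < length C" "0 \<le> t" "t \<le> 1"
    "real a + 1/2 = real (fst (dvtx C L k)) + t * (real (fst (dvtx C L (Suc k))) - real (fst (dvtx C L k)))"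
    "y = real (snd (dvtx C L k)) + t * (real (snd (dvtx C L (Suc k))) - real (snd (dvtx C L k)))"
    using assms(2) unfolding realD_mem seg_mem by blast
  have kL: "k < length L" using k(1) assms(1) by simp
  have dv: "dvtx C L k = (ce L k, cn C k)" "dvtx C L (Suc k) = (ce L (Suc k), cn C (Suc k))"
    using dvtx_eq[OF assms(1)] k(1) by auto
  show ?thesis
  proof (cases "L ! k")
    case False
    then have "real a + 1/2 = real (ce L k)" using k(4) dv ce_Suc[OF kL] by simp
    then show ?thesis using half_nat by metis
  next
    case True
    then have x: "real a + 1/2 = real (ce L k) + t" using k(4) dv ce_Suc[OF kL] by simp
    have "real (ce L k) \<le> real a + 1/2" "real a + 1/2 \<le> real (ce L k) + 1" using x k by auto
    then have "ce L k \<le> a" "a \<le> ce L k" by linarith+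
    then have ce: "ce L k = a" by simp
    then have t: "t = 1/2" using x by simp
    have ep: "epos L a = k" using kL True ce by (rule epos_unique)
    have al: "a < cnt_e L"
    proof -
      have "ce L (Suc k) = Suc a" using ce_Suc[OF kL] True ce by simp
      then show ?thesis using ce_mono[of "Suc k" "length L" L] kL by simp
    qed
    have "y = real (cn C k) + 1/2 * (real (cn C (Suc k)) - real (cn C k))" using k(5) dv t by simp
    then show ?thesis using al ep cn_Suc[OF k(1)] unfolding kD_def ddelta_def by auto
  qed
qed

lemma seg_diag: "(x, y) \<in> seg (a, b) (a + 1, b + 1) \<longleftrightarrow> (\<exists>t. 0 \<le> t \<and> t \<le> 1 \<and> x = real a + t \<and> y = real b + t)"
  unfolding seg_mem by simp

lemma above_iff:
  assumes "a < cnt_e C"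
  shows "(\<exists>q\<in>seg (a, b) (a + 1, b + 1). strictly_above (realC C) q) \<longleftrightarrow> hC C a \<le> b"
proof
  assume "\<exists>q\<in>seg (a, b) (a + 1, b + 1). strictly_above (realC C) q"
  then obtain x y where q: "(x, y) \<in> seg (a, b) (a + 1, b + 1)" "strictly_above (realC C) (x, y)" by auto
  then obtain t where t: "0 \<le> t" "t \<le> 1" "x = real a + t" "y = real b + t" unfolding seg_diag by blast
  have "(x, real (hC C a)) \<in> realC C" using G1[OF assms t(1,2)] t(3) by simp
  then have "real (hC C a) < y" using q(2) unfolding strictly_above_def by auto
  then show "hC C a \<le> b" using t by linarith
next
  assume h: "hC C a \<le> b"
  have q: "(real a + 1/2, real b + 1/2) \<in> seg (a, b) (a + 1, b + 1)" unfolding seg_diag by (intro exI[of _ "1/2"]) auto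
  have "strictly_above (realC C) (real a + 1/2, real b + 1/2)"
    unfolding strictly_above_def
  proof (intro conjI allI impI)
    show "\<exists>y. (fst (real a + 1 / 2, real b + 1 / 2), y) \<in> realC C" using G1[OF assms, of "1/2"] by auto
  next
    fix y assume "(fst (real a + 1 / 2, real b + 1 / 2), y) \<in> realC C"
    then have "y = real (hC C a)" using G2 by auto
    then show "y < snd (real a + 1 / 2, real b + 1 / 2)" using h by simp
  qed
  then show "\<exists>q\<in>seg (a, b) (a + 1, b + 1). strictly_above (realC C) q" using q by blast
qed

lemma below_iff:
  assumes "length L = length C" "a < cnt_e L"
  shows "(\<exists>q\<in>seg (a, b) (a + 1, b + 1). strictly_below (realD C L) q) \<longleftrightarrow> b < kD C L a"
proof
  assume "\<exists>q\<in>seg (a, b) (a + 1, b + 1). strictly_below (realD C L) q"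
  then obtain x y where q: "(x, y) \<in> seg (a, b) (a + 1, b + 1)" "strictly_below (realD C L) (x, y)" by auto
  then obtain t where t: "0 \<le> t" "t \<le> 1" "x = real a + t" "y = real b + t" unfolding seg_diag by blast
  have "(x, real (kD C L a) + t * ddelta C L a) \<in> realD C L" using G3[OF assms t(1,2)] t(3) by simp
  then have "y < real (kD C L a) + t * ddelta C L a" using q(2) unfolding strictly_below_def by auto
  moreover have "t * ddelta C L a \<le> t" using t unfolding ddelta_def by auto
  ultimately show "b < kD C L a" using t by linarith
next
  assume h: "b < kD C L a"
  have q: "(real a + 1/2, real b + 1/2) \<in> seg (a, b) (a + 1, b + 1)" unfolding seg_diag by (intro exI[of _ "1/2"]) auto
  have "strictly_below (realD C L) (real a + 1/2, real b + 1/2)"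
    unfolding strictly_below_def
  proof (intro conjI allI impI)
    show "\<exists>y. (fst (real a + 1 / 2, real b + 1 / 2), y) \<in> realD C L" using G3[OF assms, of "1/2"] by auto
  next
    fix y assume "(fst (real a + 1 / 2, real b + 1 / 2), y) \<in> realD C L"
    then have "y = real (kD C L a) + 1/2 * ddelta C L a" using G4[OF assms(1)] by auto
    moreover have "0 \<le> ddelta C L a" unfolding ddelta_def by auto
    moreover have "real b + 1 \<le> real (kD C L a)" using h by linarith
    ultimately show "snd (real a + 1 / 2, real b + 1 / 2) < y" by simp
  qed
  then show "\<exists>q\<in>seg (a, b) (a + 1, b + 1). strictly_below (realD C L) q" using q by blast
qed

lemma mark_next_dnext:
  assumes "length L = length C" "cnt_e L = cnt_e C" "a \<le> cnt_e C"
  shows "mark_next C L (a, b) = dnext C L (a, b)"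
proof (cases "a = cnt_e C")
  case True then show ?thesis unfolding mark_next_def dnext_def by simp
next
  case False
  then have a: "a < cnt_e C" "a < cnt_e L" using assms by auto
  show ?thesis unfolding mark_next_def dnext_def Let_def using False above_iff[OF a(1), of b] below_iff[OF assms(1) a(2), of b]
    by simp
qed


locale cl =
  fixes C L :: "bool list"
  assumes len: "length L = length C" and cntL: "cnt_e L = cnt_e C"
    and above: "weakly_above C L"
begin

abbreviation "d \<equiv> cnt_e C"

lemma ce_le: "ce C k \<le> ce L k" using above unfolding weakly_above_def by blast

lemma epos_LC: "a < d \<Longrightarrow> epos L a \<le> epos C a"
proof -
  assume a: "a < d"
  have "ce C (Suc (epos C a)) = Suc a" using ce_epos_Suc[OF a] .
  then have "a < ce L (Suc (epos C a))" using ce_le[of "Suc (epos C a)"] by simp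
  then have "epos L a < Suc (epos C a)" using epos_lt_iff[of a L] a cntL by simp
  then show ?thesis by simp
qed

lemma kD_le_hC: "a < d \<Longrightarrow> kD C L a \<le> hC C a"
  unfolding kD_def hC_def using epos_LC cn_mono by blast

lemma hC_mono: "a \<le> b \<Longrightarrow> b < d \<Longrightarrow> hC C a \<le> hC C b"
  unfolding hC_def using epos_mono[of a b C] cn_mono by (cases "a = b") (auto intro: cn_mono)

end

fun bcol :: "bool list \<Rightarrow> bool list \<Rightarrow> nat \<Rightarrow> nat" where
  "bcol C L 0 = 0"
| "bcol C L (Suc a) = (if hC C a \<le> max (bcol C L a) (kD C L a) then max (bcol C L a) (kD C L a)
                       else max (bcol C L a) (kD C L a) + 1)"

definition ccol :: "bool list \<Rightarrow> bool list \<Rightarrow> nat \<Rightarrow> nat" where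
  "ccol C L a = max (bcol C L a) (kD C L a)"

definition marked :: "bool list \<Rightarrow> bool list \<Rightarrow> nat \<Rightarrow> bool" where
  "marked C L a \<longleftrightarrow> hC C a \<le> ccol C L a"

lemma bcol_Suc: "bcol C L (Suc a) = (if marked C L a then ccol C L a else ccol C L a + 1)"
  unfolding marked_def ccol_def by simp

definition Kt :: "bool list \<Rightarrow> bool list \<Rightarrow> nat \<Rightarrow> nat" where
  "Kt C L a = (\<Sum>i<a. ccol C L i - bcol C L i + 1)"

lemma Kt_Suc: "Kt C L (Suc a) = Kt C L a + (ccol C L a - bcol C L a + 1)"
  unfolding Kt_def by simp

lemma Kt_mono: "a \<le> b \<Longrightarrow> Kt C L a \<le> Kt C L b"
  unfolding Kt_def by (rule sum_mono2) auto

lemma mvtx_0: "mvtx C L 0 = (0, 0)" unfolding mvtx_def by simp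
lemma mvtx_Suc: "mvtx C L (Suc k) = mark_next C L (mvtx C L k)" unfolding mvtx_def by simp

lemma Kt_decomp: "k < Kt C L a \<Longrightarrow> \<exists>a'<a. \<exists>i\<le>ccol C L a' - bcol C L a'. k = Kt C L a' + i"
proof (induction a)
  case 0 then show ?case by (simp add: Kt_def)
next
  case (Suc a)
  show ?case
  proof (cases "k < Kt C L a")
    case True then show ?thesis using Suc.IH by (meson less_SucI)
  next
    case False
    then show ?thesis using Suc.prems Kt_Suc[of C L a]
      by (intro exI[of _ a]) (auto intro!: exI[of _ "k - Kt C L a"])
  qed
qed

context cl begin

lemma bcol_le_hC: "a < d \<Longrightarrow> bcol C L a \<le> hC C a"
proof (induction a)
  case 0 then show ?case by simp
next
  case (Suc a)
  then have a: "a < d" by simp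
  have "bcol C L (Suc a) \<le> hC C a"
  proof -
    have "ccol C L a \<le> hC C a" unfolding ccol_def using Suc.IH[OF a] kD_le_hC[OF a] by simp
    then show ?thesis unfolding bcol_Suc marked_def by auto
  qed
  also have "hC C a \<le> hC C (Suc a)" using hC_mono Suc.prems by simp
  finally show ?case .
qed

lemma ccol_le_hC: "a < d \<Longrightarrow> ccol C L a \<le> hC C a"
  unfolding ccol_def using bcol_le_hC kD_le_hC by simp

lemma mn: "a \<le> d \<Longrightarrow> mark_next C L (a, b) = dnext C L (a, b)"
  using mark_next_dnext[OF len cntL] by simp

lemma step_north:
  assumes "a < d" "bcol C L a \<le> b" "b < ccol C L a"
  shows "mark_next C L (a, b) = (a, Suc b)"
proof -
  have "b < kD C L a" using assms unfolding ccol_def by simp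
  moreover have "b < hC C a" using calculation kD_le_hC[OF assms(1)] by simp
  ultimately show ?thesis using mn[of a b] assms(1) unfolding dnext_def by simp
qed

lemma step_col:
  assumes "a < d"
  shows "mark_next C L (a, ccol C L a) = (Suc a, bcol C L (Suc a))"
proof -
  have "kD C L a \<le> ccol C L a" unfolding ccol_def by simp
  then show ?thesis using mn[of a "ccol C L a"] assms unfolding dnext_def bcol_Suc marked_def by auto
qed

lemma orbit_col: "a \<le> d \<Longrightarrow> mvtx C L (Kt C L a) = (a, bcol C L a)"
proof (induction a)
  case 0 then show ?case by (simp add: Kt_def mvtx_0)
next
  case (Suc a)
  then have a: "a < d" by simp
  have inner: "\<And>i. i \<le> ccol C L a - bcol C L a \<Longrightarrow> mvtx C L (Kt C L a + i) = (a, bcol C L a + i)"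
  proof -
    fix i assume "i \<le> ccol C L a - bcol C L a"
    then show "mvtx C L (Kt C L a + i) = (a, bcol C L a + i)"
    proof (induction i)
      case 0 then show ?case using Suc.IH a by simp
    next
      case (Suc i)
      then have "mvtx C L (Kt C L a + i) = (a, bcol C L a + i)" by simp
      moreover have "bcol C L a + i < ccol C L a" using Suc.prems by simp
      ultimately show ?case using step_north[OF a] by (simp add: mvtx_Suc)
    qed
  qed
  have "bcol C L a \<le> ccol C L a" unfolding ccol_def by simp
  then have "mvtx C L (Kt C L a + (ccol C L a - bcol C L a)) = (a, ccol C L a)" using inner[of "ccol C L a - bcol C L a"] by simp
  then have "mvtx C L (Suc (Kt C L a + (ccol C L a - bcol C L a))) = (Suc a, bcol C L (Suc a))"
    using step_col[OF a] by (simp add: mvtx_Suc)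
  then show ?case using Kt_Suc[of C L a] by simp
qed

lemma orbit_inner:
  assumes "a < d" "i \<le> ccol C L a - bcol C L a"
  shows "mvtx C L (Kt C L a + i) = (a, bcol C L a + i)"
  using assms(2)
proof (induction i)
  case 0 then show ?case using orbit_col assms(1) by simp
next
  case (Suc i)
  then have "mvtx C L (Kt C L a + i) = (a, bcol C L a + i)" by simp
  moreover have "bcol C L a + i < ccol C L a" using Suc.prems by simp
  ultimately show ?case using step_north[OF assms(1)] by (simp add: mvtx_Suc)
qed

lemma orbit_end: "mvtx C L (Kt C L d + i) = (d, bcol C L d + i)"
proof (induction i)
  case 0 then show ?case using orbit_col by simp
next
  case (Suc i)
  then show ?case using mn[of d] by (simp add: mvtx_Suc dnext_def)
qed

lemma orbit_fst: "k < Kt C L d \<Longrightarrow> fst (mvtx C L k) < d"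
proof -
  assume "k < Kt C L d"
  then obtain a i where "a < d" "i \<le> ccol C L a - bcol C L a" "k = Kt C L a + i" using Kt_decomp by blast
  then show ?thesis using orbit_inner by simp
qed

lemma visit_iff:
  assumes "a < d"
  shows "(\<exists>k. mvtx C L k = (a, y)) \<longleftrightarrow> bcol C L a \<le> y \<and> y \<le> ccol C L a"
proof
  assume "\<exists>k. mvtx C L k = (a, y)"
  then obtain k where k: "mvtx C L k = (a, y)" by blast
  show "bcol C L a \<le> y \<and> y \<le> ccol C L a"
  proof (cases "k < Kt C L d")
    case True
    then obtain a' i where ai: "a' < d" "i \<le> ccol C L a' - bcol C L a'" "k = Kt C L a' + i" using Kt_decomp by blast
    then have "mvtx C L k = (a', bcol C L a' + i)" using orbit_inner by simp
    moreover have "bcol C L a' \<le> ccol C L a'" unfolding ccol_def by simp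
    ultimately show ?thesis using k ai by auto
  next
    case False
    then have "mvtx C L k = (d, bcol C L d + (k - Kt C L d))" using orbit_end[of "k - Kt C L d"] by simp
    then show ?thesis using k assms by simp
  qed
next
  assume "bcol C L a \<le> y \<and> y \<le> ccol C L a"
  then have "mvtx C L (Kt C L a + (y - bcol C L a)) = (a, y)" using orbit_inner[OF assms, of "y - bcol C L a"] by auto
  then show "\<exists>k. mvtx C L k = (a, y)" by blast
qed

lemma vtx_epos: "a < d \<Longrightarrow> vtx C (epos C a) = (a, hC C a)"
  unfolding vtx_def hC_def using epos_props by simp

lemma mark_east_iff:
  assumes "a < d"
  shows "vtx C (epos C a) \<in> mark_east C L \<longleftrightarrow> marked C L a"
proof
  assume "vtx C (epos C a) \<in> mark_east C L"
  then have "\<exists>k. mvtx C L k = (a, hC C a)" unfolding mark_east_def vtx_epos[OF assms] by auto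
  then show "marked C L a" unfolding marked_def using visit_iff[OF assms] by simp
next
  assume m: "marked C L a"
  have b: "bcol C L a \<le> hC C a" using bcol_le_hC[OF assms] .
  have c: "hC C a \<le> ccol C L a" using m unfolding marked_def .
  define k where "k = Kt C L a + (hC C a - bcol C L a)"
  have mk: "mvtx C L k = (a, hC C a)" unfolding k_def using orbit_inner[OF assms, of "hC C a - bcol C L a"] b c by simp
  have "k < Kt C L (Suc a)" unfolding k_def Kt_Suc using b c by simp
  also have "Kt C L (Suc a) \<le> Kt C L d" using assms by (intro Kt_mono) simp
  finally have kd: "k < Kt C L d" .
  have notend: "\<forall>j\<le>k. mvtx C L j \<noteq> (d, cnt_n C)"
  proof (intro allI impI)
    fix j assume "j \<le> k"
    then have "j < Kt C L d" using kd by simp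
    then have "fst (mvtx C L j) < d" by (rule orbit_fst)
    then show "mvtx C L j \<noteq> (d, cnt_n C)" by auto
  qed
  have "mvtx C L (Suc k) = (Suc a, hC C a)" using mk mn[of a "hC C a"] assms by (simp add: mvtx_Suc dnext_def)
  then have "mvtx C L (Suc k) = (fst (mvtx C L k) + 1, snd (mvtx C L k))" using mk by simp
  then have "mvtx C L k \<in> mark_east C L" unfolding mark_east_def using notend by blast
  then show "vtx C (epos C a) \<in> mark_east C L" using mk vtx_epos[OF assms] by simp
qed

lemma stL_char: "stL L C = {Suc (epos C a) | a. a < d \<and> \<not> marked C L a}"
proof -
  have "stL L C = {i \<in> Es C. vtx C (i - 1) \<notin> mark_east C L}" unfolding stL_def ..
  also have "\<dots> = {Suc (epos C a) | a. a < d \<and> \<not> marked C L a}"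
    using Es_iff[of _ C] mark_east_iff by auto
  finally show ?thesis .
qed

end


fun beta :: "nat set \<Rightarrow> bool list \<Rightarrow> nat \<Rightarrow> nat" where
  "beta S L 0 = 0"
| "beta S L (Suc k) = min (ce L (Suc k)) (beta S L k + (if Suc k \<in> S then 0 else 1))"

context cl begin

abbreviation "n \<equiv> length C"
abbreviation "S \<equiv> stL L C"

lemma S_iff: "k < n \<Longrightarrow> Suc k \<in> S \<longleftrightarrow> C ! k \<and> \<not> marked C L (ce C k)"
proof -
  assume k: "k < n"
  show ?thesis
  proof
    assume "Suc k \<in> S"
    then obtain a where a: "Suc k = Suc (epos C a)" "a < d" "\<not> marked C L a" using stL_char by auto
    then have "k = epos C a" by simp
    then show "C ! k \<and> \<not> marked C L (ce C k)" using epos_props[OF a(2)] a(3) by simp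
  next
    assume h: "C ! k \<and> \<not> marked C L (ce C k)"
    have "ce C (Suc k) = Suc (ce C k)" using ce_Suc[OF k] h by simp
    then have ad: "ce C k < d" using ce_mono[of "Suc k" n C] k by simp
    have "epos C (ce C k) = k" using k h by (intro epos_unique) auto
    then show "Suc k \<in> S" using stL_char ad h by force
  qed
qed

definition Phi :: "nat \<Rightarrow> int" where "Phi k = int (beta S L k) - int (ce C k)"

definition terms :: "nat \<Rightarrow> int set" where
  "terms k = insert (int (ce L k) - int (ce C k)) (insert (int (cn C k) - int (bcol C L (ce C k)))
      ((\<lambda>a. int (cn C k) - int (kD C L a) + int a - int (ce C k)) ` {ce C k..<ce L k}))"

lemma F1: "k \<le> n \<Longrightarrow> bcol C L (ce C k) \<le> cn C k"
proof (cases "ce C k")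
  case 0 then show ?thesis by simp
next
  case (Suc x)
  assume k: "k \<le> n"
  have xd: "x < d" using Suc ce_mono[of k n C] k by simp
  have "bcol C L (Suc x) \<le> hC C x"
    using ccol_le_hC[OF xd] unfolding bcol_Suc marked_def by auto
  also have "hC C x \<le> cn C k"
  proof -
    have "epos C x < k" using epos_lt_iff[OF xd, of k] Suc by simp
    then show ?thesis unfolding hC_def by (intro cn_mono) simp
  qed
  finally show ?thesis using Suc by simp
qed

lemma F2: "a < ce L k \<Longrightarrow> kD C L a \<le> cn C k"
proof -
  assume a: "a < ce L k"
  have ad: "a < cnt_e L" using a ce_mono[of k "length L" L] by (cases "k \<le> length L") auto
  have "epos L a < k" using epos_lt_iff[OF ad, of k] a by simp
  then show ?thesis unfolding kD_def by (intro cn_mono) simp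
qed

lemma F3: "k < n \<Longrightarrow> L ! k \<Longrightarrow> kD C L (ce L k) = cn C k"
proof -
  assume k: "k < n" "L ! k"
  have "epos L (ce L k) = k" using k len by (intro epos_unique) auto
  then show ?thesis unfolding kD_def by simp
qed

lemma hC_at: "k < n \<Longrightarrow> C ! k \<Longrightarrow> hC C (ce C k) = cn C k \<and> ce C k < d"
proof -
  assume k: "k < n" "C ! k"
  have e: "epos C (ce C k) = k" using k by (intro epos_unique) auto
  have "ce C (Suc k) = Suc (ce C k)" using ce_Suc[OF k(1)] k by simp
  then have "ce C k < d" using ce_mono[of "Suc k" n C] k by simp
  then show ?thesis unfolding hC_def using e by simp
qed

lemma F5: "k < n \<Longrightarrow> C ! k \<Longrightarrow> ce L k = ce C k \<Longrightarrow> marked C L (ce C k)"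
proof -
  assume k: "k < n" "C ! k" "ce L k = ce C k"
  have "ce C (Suc k) = Suc (ce C k)" using ce_Suc[OF k(1)] k by simp
  moreover have "ce C (Suc k) \<le> ce L (Suc k)" by (rule ce_le)
  moreover have "ce L (Suc k) = ce L k + (if L ! k then 1 else 0)" using ce_Suc[of k L] k len by simp
  ultimately have Lk: "L ! k" using k by (auto split: if_splits)
  have "kD C L (ce C k) = cn C k" using F3[OF k(1) Lk] k(3) by simp
  then have "hC C (ce C k) \<le> ccol C L (ce C k)" using hC_at[OF k(1,2)] unfolding ccol_def by simp
  then show ?thesis unfolding marked_def .
qed

lemma NN: "k \<le> n \<Longrightarrow> T \<in> terms k \<Longrightarrow> 0 \<le> T"
  unfolding terms_def using F1 F2 ce_le[of k] by force

lemma beta_Suc_Phi: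
  assumes k: "k < n"
  shows "Phi (Suc k) = min (int (ce L (Suc k)) - int (ce C (Suc k)))
          (Phi k + (if Suc k \<in> S then 0 else 1) - (if C ! k then 1 else 0))"
  unfolding Phi_def using ce_Suc[OF k] by (simp add: min_def)

lemma inv_step:
  assumes k: "k < n"
    and U: "\<forall>T\<in>terms k. Phi k \<le> T" and LB: "\<exists>T\<in>terms k. T \<le> Phi k"
  shows "(\<forall>T\<in>terms (Suc k). Phi (Suc k) \<le> T) \<and> (\<exists>T\<in>terms (Suc k). T \<le> Phi (Suc k))"
proof -
  define x where "x = ce C k"
  define y where "y = cn C k"
  define lk where "lk = ce L k"
  have kL: "k < length L" using k len by simp
  have lk': "ce L (Suc k) = lk + (if L ! k then 1 else 0)" unfolding lk_def using ce_Suc[OF kL] .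
  have xlk: "x \<le> lk" unfolding x_def lk_def using ce_le .
  have newp: "L ! k \<Longrightarrow> kD C L lk = y" unfolding lk_def y_def using F3[OF k] by simp
  have Ug: "Phi k \<le> int lk - int x" using U unfolding terms_def x_def lk_def by simp
  have Ub: "Phi k \<le> int y - int (bcol C L x)" using U unfolding terms_def x_def y_def by simp
  have Up: "\<And>a. x \<le> a \<Longrightarrow> a < lk \<Longrightarrow> Phi k \<le> int y - int (kD C L a) + int a - int x"
    using U unfolding terms_def x_def y_def lk_def by auto
  obtain T where T: "T \<in> terms k" "T \<le> Phi k" using LB by blast
  have Tcases: "T = int lk - int x \<or> T = int y - int (bcol C L x) \<or> (\<exists>a. x \<le> a \<and> a < lk \<and> T = int y - int (kD C L a) + int a - int x)"
    using T(1) unfolding terms_def x_def y_def lk_def by auto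
  have nnk: "0 \<le> Phi k"
  proof -
    have "0 \<le> T" using NN[of k T] T(1) k by simp
    then show ?thesis using T(2) by simp
  qed
  show ?thesis
  proof (cases "C ! k")
    case False
    have x': "ce C (Suc k) = x" unfolding x_def using ce_Suc[OF k] False by simp
    have y': "cn C (Suc k) = y + 1" unfolding y_def using cn_Suc[OF k] False by simp
    have nS: "Suc k \<notin> S" using S_iff[OF k] False by simp
    have ph: "Phi (Suc k) = min (int (ce L (Suc k)) - int x) (Phi k + 1)"
      using beta_Suc_Phi[OF k] x' nS False by simp
    have tS: "terms (Suc k) = insert (int (ce L (Suc k)) - int x) (insert (int y + 1 - int (bcol C L x))
      ((\<lambda>a. int y + 1 - int (kD C L a) + int a - int x) ` {x..<ce L (Suc k)}))"
      unfolding terms_def x' y' by (simp add: algebra_simps)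
    have part1: "\<forall>T\<in>terms (Suc k). Phi (Suc k) \<le> T"
    proof
      fix T' assume "T' \<in> terms (Suc k)"
      then consider "T' = int (ce L (Suc k)) - int x" | "T' = int y + 1 - int (bcol C L x)"
        | a where "x \<le> a" "a < ce L (Suc k)" "T' = int y + 1 - int (kD C L a) + int a - int x"
        unfolding tS by auto
      then show "Phi (Suc k) \<le> T'"
      proof cases
        case 1 then show ?thesis using ph by simp
      next
        case 2 then show ?thesis using ph Ub by simp
      next
        case (3 a)
        show ?thesis
        proof (cases "a < lk")
          case True then show ?thesis using ph Up[OF 3(1) True] 3 by simp
        next
          case False
          then have "a = lk" "L ! k" using 3 lk' by (auto split: if_splits)
          then show ?thesis using ph Ug 3 newp by simp
        qed
      qed
    qed
    have part2: "\<exists>T\<in>terms (Suc k). T \<le> Phi (Suc k)"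
    proof (cases "Phi (Suc k) = int (ce L (Suc k)) - int x")
      case True then show ?thesis unfolding tS by auto
    next
      case False
      then have ph1: "Phi (Suc k) = Phi k + 1" using ph by (simp add: min_def split: if_splits)
      from Tcases show ?thesis
      proof (elim disjE exE conjE)
        assume "T = int lk - int x"
        then have "int (ce L (Suc k)) - int x \<le> Phi (Suc k)" using ph1 T(2) lk' by (auto split: if_splits)
        then show ?thesis unfolding tS by auto
      next
        assume "T = int y - int (bcol C L x)"
        then have "int y + 1 - int (bcol C L x) \<le> Phi (Suc k)" using ph1 T(2) by simp
        then show ?thesis unfolding tS by auto
      next
        fix a assume a: "x \<le> a" "a < lk" "T = int y - int (kD C L a) + int a - int x"
        then have "int y + 1 - int (kD C L a) + int a - int x \<le> Phi (Suc k)" using ph1 T(2) by simp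
        moreover have "a \<in> {x..<ce L (Suc k)}" using a lk' by auto
        ultimately show ?thesis unfolding tS by blast
      qed
    qed
    show ?thesis using part1 part2 by blast
  next
    case True
    have x': "ce C (Suc k) = x + 1" unfolding x_def using ce_Suc[OF k] True by simp
    have y': "cn C (Suc k) = y" unfolding y_def using cn_Suc[OF k] True by simp
    have hx: "hC C x = y" "x < d" using hC_at[OF k True] unfolding x_def y_def by auto
    have tS: "terms (Suc k) = insert (int (ce L (Suc k)) - int (x + 1)) (insert (int y - int (bcol C L (x + 1)))
      ((\<lambda>a. int y - int (kD C L a) + int a - int (x + 1)) ` {x + 1..<ce L (Suc k)}))"
      unfolding terms_def x' y' by simp
    have g'nn: "0 \<le> int (ce L (Suc k)) - int (x + 1)" using ce_le[of "Suc k"] x' by simp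
    show ?thesis
    proof (cases "marked C L x")
      case True
      then have inS: "Suc k \<notin> S" using S_iff[OF k] x_def by simp
      have ph: "Phi (Suc k) = min (int (ce L (Suc k)) - int (x + 1)) (Phi k)"
        using beta_Suc_Phi[OF k] x' inS \<open>C ! k\<close> by simp
      have phk0: "Phi k \<le> 0"
      proof (cases "x < lk")
        case False
        then show ?thesis using Ug xlk by simp
      next
        case True
        have "y \<le> ccol C L x" using \<open>marked C L x\<close> hx unfolding marked_def by simp
        then have "y \<le> bcol C L x \<or> y \<le> kD C L x" unfolding ccol_def by auto
        then show ?thesis using Ub Up[of x] True by auto
      qed
      have phS: "Phi (Suc k) = 0" using ph phk0 nnk g'nn by simp
      have bx: "bcol C L (x + 1) = y"
      proof -
        have "bcol C L (Suc x) = ccol C L x" using True unfolding bcol_Suc by simp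
        moreover have "ccol C L x = y" using ccol_le_hC[OF hx(2)] True hx unfolding marked_def by simp
        ultimately show ?thesis by simp
      qed
      have "\<forall>T\<in>terms (Suc k). Phi (Suc k) \<le> T" using NN[of "Suc k"] k phS by simp
      moreover have "\<exists>T\<in>terms (Suc k). T \<le> Phi (Suc k)" unfolding tS using bx phS by auto
      ultimately show ?thesis by blast
    next
      case False
      then have inS: "Suc k \<in> S" using S_iff[OF k] x_def \<open>C ! k\<close> by simp
      have ph: "Phi (Suc k) = min (int (ce L (Suc k)) - int (x + 1)) (Phi k - 1)"
        using beta_Suc_Phi[OF k] x' inS \<open>C ! k\<close> by simp
      have xl: "x < lk"
      proof (rule ccontr)
        assume "\<not> x < lk"
        then have "ce L k = ce C k" using xlk unfolding x_def lk_def by simp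
        then show False using F5[OF k \<open>C ! k\<close>] False unfolding x_def by simp
      qed
      have bx: "bcol C L (x + 1) = max (bcol C L x) (kD C L x) + 1"
        using False unfolding bcol_Suc ccol_def by (simp add: marked_def ccol_def)
      have part1: "\<forall>T\<in>terms (Suc k). Phi (Suc k) \<le> T"
      proof
        fix T' assume "T' \<in> terms (Suc k)"
        then consider "T' = int (ce L (Suc k)) - int (x + 1)" | "T' = int y - int (bcol C L (x + 1))"
          | a where "x + 1 \<le> a" "a < ce L (Suc k)" "T' = int y - int (kD C L a) + int a - int (x + 1)"
          unfolding tS by auto
        then show "Phi (Suc k) \<le> T'"
        proof cases
          case 1 then show ?thesis using ph by simp
        next
          case 2 then show ?thesis using ph Ub Up[of x] xl bx by (auto simp: max_def)
        next
          case (3 a)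
          show ?thesis
          proof (cases "a < lk")
            case True then show ?thesis using ph Up[of a] True 3 by simp
          next
            case False
            then have "a = lk" "L ! k" using 3 lk' by (auto split: if_splits)
            then show ?thesis using ph Ug 3 newp by simp
          qed
        qed
      qed
      have part2: "\<exists>T\<in>terms (Suc k). T \<le> Phi (Suc k)"
      proof (cases "Phi (Suc k) = int (ce L (Suc k)) - int (x + 1)")
        case True then show ?thesis unfolding tS by auto
      next
        case False
        then have ph1: "Phi (Suc k) = Phi k - 1" using ph by (simp add: min_def split: if_splits)
        from Tcases show ?thesis
        proof (elim disjE exE conjE)
          assume Tg: "T = int lk - int x"
          show ?thesis
          proof (cases "L ! k")
            case True
            then have "kD C L lk = y" using newp by simp
            moreover have "lk \<in> {x + 1..<ce L (Suc k)}" using xl lk' True by auto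
            moreover have "int y - int (kD C L lk) + int lk - int (x + 1) \<le> Phi (Suc k)"
              using calculation(1) Tg T(2) ph1 by simp
            ultimately show ?thesis unfolding tS by blast
          next
            case False
            then have "int (ce L (Suc k)) - int (x + 1) \<le> Phi (Suc k)" using lk' Tg T(2) ph1 by simp
            then show ?thesis unfolding tS by auto
          qed
        next
          assume "T = int y - int (bcol C L x)"
          then have "int y - int (bcol C L (x + 1)) \<le> Phi (Suc k)" using ph1 T(2) bx by (auto simp: max_def)
          then show ?thesis unfolding tS by auto
        next
          fix a assume a: "x \<le> a" "a < lk" "T = int y - int (kD C L a) + int a - int x"
          show ?thesis
          proof (cases "a = x")
            case True
            then have "int y - int (bcol C L (x + 1)) \<le> Phi (Suc k)" using ph1 T(2) bx a by (auto simp: max_def)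
            then show ?thesis unfolding tS by auto
          next
            case False
            then have "a \<in> {x + 1..<ce L (Suc k)}" using a lk' by auto
            moreover have "int y - int (kD C L a) + int a - int (x + 1) \<le> Phi (Suc k)" using ph1 T(2) a by simp
            ultimately show ?thesis unfolding tS by blast
          qed
        qed
      qed
      show ?thesis using part1 part2 by blast
    qed
  qed
qed

lemma inv_all: "k \<le> n \<Longrightarrow> (\<forall>T\<in>terms k. Phi k \<le> T) \<and> (\<exists>T\<in>terms k. T \<le> Phi k)"
proof (induction k)
  case 0
  have "terms 0 = {0}" unfolding terms_def by simp
  moreover have "Phi 0 = 0" unfolding Phi_def by simp
  ultimately show ?case by simp
next
  case (Suc k)
  then show ?case using inv_step[of k] by simp
qed

lemma Phi_nn: "k \<le> n \<Longrightarrow> ce C k \<le> beta S L k"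
proof -
  assume k: "k \<le> n"
  obtain T where "T \<in> terms k" "T \<le> Phi k" using inv_all[OF k] by blast
  then have "0 \<le> Phi k" using NN[OF k] by force
  then show ?thesis unfolding Phi_def by simp
qed

lemma marked_beta:
  assumes k: "k < n" and Ck: "C ! k" and m: "marked C L (ce C k)"
  shows "beta S L k = ce C k"
proof -
  define x where "x = ce C k"
  define y where "y = cn C k"
  have U: "\<forall>T\<in>terms k. Phi k \<le> T" using inv_all k by simp
  have hx: "hC C x = y" "x < d" using hC_at[OF k Ck] unfolding x_def y_def by auto
  have "Phi k \<le> 0"
  proof (cases "x < ce L k")
    case False
    then have "int (ce L k) - int x \<le> 0" by simp
    then show ?thesis using U unfolding terms_def x_def by auto
  next
    case True
    have "y \<le> ccol C L x" using m hx unfolding marked_def x_def by simp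
    then have "y \<le> bcol C L x \<or> y \<le> kD C L x" unfolding ccol_def by auto
    then show ?thesis
    proof
      assume "y \<le> bcol C L x"
      then show ?thesis using U unfolding terms_def x_def y_def by auto
    next
      assume "y \<le> kD C L x"
      moreover have "int y - int (kD C L x) + int x - int x \<in> terms k" unfolding terms_def
        by (rule insertI2, rule insertI2, rule rev_image_eqI[of x]) (use True in \<open>auto simp: x_def y_def\<close>)
      ultimately show ?thesis using U by fastforce
    qed
  qed
  moreover have "ce C k \<le> beta S L k" using Phi_nn k by simp
  ultimately show ?thesis unfolding Phi_def by simp
qed

end


definition Gfam :: "bool list \<Rightarrow> bool list \<Rightarrow> nat \<Rightarrow> nat \<Rightarrow> nat set set" where
  "Gfam U L k x = Es ` {p. length p = k \<and> cnt_e p = x \<and> (\<forall>i\<le>k. ce U i \<le> ce p i \<and> ce p i \<le> ce L i)}"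

lemma Gfam_sub: "Gfam U L k x \<subseteq> Pow {1..k}"
  unfolding Gfam_def using Es_sub by fastforce

lemma take_snoc_le: "i \<le> length p \<Longrightarrow> take i (p @ [b]) = take i p" by simp

lemma Gfam_split0:
  "{B \<in> Gfam U L (Suc k) x. Suc k \<notin> B} = (if ce U (Suc k) \<le> x \<and> x \<le> ce L (Suc k) then Gfam U L k x else {})"
proof -
  have "{B \<in> Gfam U L (Suc k) x. Suc k \<notin> B} = Es ` {p. length p = Suc k \<and> cnt_e p = x \<and> (\<forall>i\<le>Suc k. ce U i \<le> ce p i \<and> ce p i \<le> ce L i) \<and> \<not> p ! k}"
    unfolding Gfam_def Es_def by auto
  also have "{p. length p = Suc k \<and> cnt_e p = x \<and> (\<forall>i\<le>Suc k. ce U i \<le> ce p i \<and> ce p i \<le> ce L i) \<and> \<not> p ! k}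
     = (\<lambda>q. q @ [False]) ` (if ce U (Suc k) \<le> x \<and> x \<le> ce L (Suc k) then {q. length q = k \<and> cnt_e q = x \<and> (\<forall>i\<le>k. ce U i \<le> ce q i \<and> ce q i \<le> ce L i)} else {})"
  proof (intro set_eqI iffI)
    fix p assume p: "p \<in> {p. length p = Suc k \<and> cnt_e p = x \<and> (\<forall>i\<le>Suc k. ce U i \<le> ce p i \<and> ce p i \<le> ce L i) \<and> \<not> p ! k}"
    define q where "q = butlast p"
    define b where "b = last p"
    have pne: "p \<noteq> []" using p by auto
    have qb: "p = q @ [b]" "length q = k" using pne p unfolding q_def b_def by auto
    have b: "b = False" using p qb by (simp add: nth_append)
    have cq: "cnt_e q = x" using p qb b by simp
    have pb: "\<forall>i\<le>Suc k. ce U i \<le> ce p i \<and> ce p i \<le> ce L i" using p by simp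
    have "ce p (Suc k) = x" using p by simp
    then have band: "ce U (Suc k) \<le> x \<and> x \<le> ce L (Suc k)" using pb by (metis order_refl)
    have "\<forall>i\<le>k. ce U i \<le> ce q i \<and> ce q i \<le> ce L i"
    proof (intro allI impI)
      fix i assume "i \<le> k"
      then have "ce p i = ce q i" using qb by simp
      then show "ce U i \<le> ce q i \<and> ce q i \<le> ce L i" using pb \<open>i \<le> k\<close> by (metis le_SucI)
    qed
    then show "p \<in> (\<lambda>q. q @ [False]) ` (if ce U (Suc k) \<le> x \<and> x \<le> ce L (Suc k) then {q. length q = k \<and> cnt_e q = x \<and> (\<forall>i\<le>k. ce U i \<le> ce q i \<and> ce q i \<le> ce L i)} else {})"
      using band qb b cq by auto
  next
    fix p assume "p \<in> (\<lambda>q. q @ [False]) ` (if ce U (Suc k) \<le> x \<and> x \<le> ce L (Suc k) then {q. length q = k \<and> cnt_e q = x \<and> (\<forall>i\<le>k. ce U i \<le> ce q i \<and> ce q i \<le> ce L i)} else {})"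
    then obtain q where q: "p = q @ [False]" "length q = k" "cnt_e q = x" "\<forall>i\<le>k. ce U i \<le> ce q i \<and> ce q i \<le> ce L i"
      "ce U (Suc k) \<le> x" "x \<le> ce L (Suc k)" by (auto split: if_splits)
    have "\<forall>i\<le>Suc k. ce U i \<le> ce p i \<and> ce p i \<le> ce L i"
    proof (intro allI impI)
      fix i assume "i \<le> Suc k"
      then consider "i \<le> k" | "i = Suc k" by linarith
      then show "ce U i \<le> ce p i \<and> ce p i \<le> ce L i"
      proof cases
        case 1 then show ?thesis using q by simp
      next
        case 2 then show ?thesis using q by simp
      qed
    qed
    then show "p \<in> {p. length p = Suc k \<and> cnt_e p = x \<and> (\<forall>i\<le>Suc k. ce U i \<le> ce p i \<and> ce p i \<le> ce L i) \<and> \<not> p ! k}"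
      using q by (simp add: nth_append)
  qed
  also have "Es ` \<dots> = (if ce U (Suc k) \<le> x \<and> x \<le> ce L (Suc k) then Gfam U L k x else {})"
    unfolding Gfam_def image_image by (simp add: Es_snoc)
  finally show ?thesis .
qed

lemma Gfam_split1:
  "(\<lambda>B. B - {Suc k}) ` {B \<in> Gfam U L (Suc k) x. Suc k \<in> B} = (if 1 \<le> x \<and> ce U (Suc k) \<le> x \<and> x \<le> ce L (Suc k) then Gfam U L k (x - 1) else {})"
proof -
  have "{B \<in> Gfam U L (Suc k) x. Suc k \<in> B} = Es ` {p. length p = Suc k \<and> cnt_e p = x \<and> (\<forall>i\<le>Suc k. ce U i \<le> ce p i \<and> ce p i \<le> ce L i) \<and> p ! k}"
    unfolding Gfam_def Es_def by auto
  also have "{p. length p = Suc k \<and> cnt_e p = x \<and> (\<forall>i\<le>Suc k. ce U i \<le> ce p i \<and> ce p i \<le> ce L i) \<and> p ! k}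
     = (\<lambda>q. q @ [True]) ` (if 1 \<le> x \<and> ce U (Suc k) \<le> x \<and> x \<le> ce L (Suc k) then {q. length q = k \<and> cnt_e q = x - 1 \<and> (\<forall>i\<le>k. ce U i \<le> ce q i \<and> ce q i \<le> ce L i)} else {})"
  proof (intro set_eqI iffI)
    fix p assume p: "p \<in> {p. length p = Suc k \<and> cnt_e p = x \<and> (\<forall>i\<le>Suc k. ce U i \<le> ce p i \<and> ce p i \<le> ce L i) \<and> p ! k}"
    define q where "q = butlast p"
    define b where "b = last p"
    have pne: "p \<noteq> []" using p by auto
    have qb: "p = q @ [b]" "length q = k" using pne p unfolding q_def b_def by auto
    have b: "b = True" using p qb by (simp add: nth_append)
    have cq: "cnt_e q = x - 1" "1 \<le> x" using p qb b by auto
    have pb: "\<forall>i\<le>Suc k. ce U i \<le> ce p i \<and> ce p i \<le> ce L i" using p by simp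
    have "ce p (Suc k) = x" using p by simp
    then have band: "ce U (Suc k) \<le> x \<and> x \<le> ce L (Suc k)" using pb by (metis order_refl)
    have "\<forall>i\<le>k. ce U i \<le> ce q i \<and> ce q i \<le> ce L i"
    proof (intro allI impI)
      fix i assume "i \<le> k"
      then have "ce p i = ce q i" using qb by simp
      then show "ce U i \<le> ce q i \<and> ce q i \<le> ce L i" using pb \<open>i \<le> k\<close> by (metis le_SucI)
    qed
    then show "p \<in> (\<lambda>q. q @ [True]) ` (if 1 \<le> x \<and> ce U (Suc k) \<le> x \<and> x \<le> ce L (Suc k) then {q. length q = k \<and> cnt_e q = x - 1 \<and> (\<forall>i\<le>k. ce U i \<le> ce q i \<and> ce q i \<le> ce L i)} else {})"
      using band qb b cq by auto
  next
    fix p assume "p \<in> (\<lambda>q. q @ [True]) ` (if 1 \<le> x \<and> ce U (Suc k) \<le> x \<and> x \<le> ce L (Suc k) then {q. length q = k \<and> cnt_e q = x - 1 \<and> (\<forall>i\<le>k. ce U i \<le> ce q i \<and> ce q i \<le> ce L i)} else {})"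
    then obtain q where q: "p = q @ [True]" "length q = k" "cnt_e q = x - 1" "\<forall>i\<le>k. ce U i \<le> ce q i \<and> ce q i \<le> ce L i"
      "ce U (Suc k) \<le> x" "x \<le> ce L (Suc k)" "1 \<le> x" by (auto split: if_splits)
    have "\<forall>i\<le>Suc k. ce U i \<le> ce p i \<and> ce p i \<le> ce L i"
    proof (intro allI impI)
      fix i assume "i \<le> Suc k"
      then consider "i \<le> k" | "i = Suc k" by linarith
      then show "ce U i \<le> ce p i \<and> ce p i \<le> ce L i"
      proof cases
        case 1 then show ?thesis using q by simp
      next
        case 2 then show ?thesis using q by simp
      qed
    qed
    then show "p \<in> {p. length p = Suc k \<and> cnt_e p = x \<and> (\<forall>i\<le>Suc k. ce U i \<le> ce p i \<and> ce p i \<le> ce L i) \<and> p ! k}"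
      using q by (simp add: nth_append)
  qed
  finally have "{B \<in> Gfam U L (Suc k) x. Suc k \<in> B} = Es ` (\<lambda>q. q @ [True]) ` (if 1 \<le> x \<and> ce U (Suc k) \<le> x \<and> x \<le> ce L (Suc k) then {q. length q = k \<and> cnt_e q = x - 1 \<and> (\<forall>i\<le>k. ce U i \<le> ce q i \<and> ce q i \<le> ce L i)} else {})" .
  moreover have "\<And>q. length q = k \<Longrightarrow> Es (q @ [True]) - {Suc k} = Es q"
    using Es_snoc Es_sub by fastforce
  ultimately show ?thesis unfolding Gfam_def image_image by (auto simp: image_iff)
qed

context cl begin

lemma beta_le_L: "beta S L k \<le> ce L k"
  by (cases k) auto

lemma win_G:
  fixes U :: "bool list" and k x :: nat
  assumes U: "\<forall>i\<le>n. ce U i \<le> ce C i"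
  shows "k \<le> n \<Longrightarrow> ce C k \<le> x \<Longrightarrow> x \<le> beta S L k \<Longrightarrow> win k (Gfam U L k x) S"
proof (induction k arbitrary: x)
  case 0
  then have "x = 0" by simp
  moreover have "[] \<in> {p. length p = 0 \<and> cnt_e p = 0 \<and> (\<forall>i\<le>0. ce U i \<le> ce p i \<and> ce p i \<le> ce L i)}" by simp
  ultimately show ?case unfolding Gfam_def by auto
next
  case (Suc k)
  have k: "k < n" using Suc.prems by simp
  have band: "ce U (Suc k) \<le> x \<and> x \<le> ce L (Suc k)"
    using U Suc.prems beta_le_L[of "Suc k"] by fastforce
  have b: "beta S L (Suc k) \<le> beta S L k + (if Suc k \<in> S then 0 else 1)" by simp
  show ?case
  proof (cases "Suc k \<in> S")
    case True
    then have Ck: "C ! k" using S_iff[OF k] by simp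
    have "ce C (Suc k) = ce C k + 1" using ce_Suc[OF k] Ck by simp
    then have x1: "1 \<le> x" "ce C k \<le> x - 1" using Suc.prems by auto
    have xb: "x \<le> beta S L k" using b True Suc.prems by simp
    have "win k (Gfam U L k x) S" using Suc.IH[of x] k x1 xb by simp
    moreover have "win k (Gfam U L k (x - 1)) S" using Suc.IH[of "x - 1"] k x1 xb by simp
    ultimately show ?thesis using True Gfam_split0[where U=U and L=L and k=k and x=x] Gfam_split1[where U=U and L=L and k=k and x=x] band x1 by simp
  next
    case False
    have xb: "x \<le> beta S L k + 1" using b False Suc.prems by simp
    show ?thesis
    proof (cases "1 \<le> x \<and> ce C k \<le> x - 1")
      case True
      then have "win k (Gfam U L k (x - 1)) S" using Suc.IH[of "x - 1"] k xb by simp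
      then show ?thesis using False Gfam_split1[where U=U and L=L and k=k and x=x] band True by simp
    next
      case False2: False
      have "ce C k \<le> ce C (Suc k)" by (rule ce_mono) simp
      then have "x = ce C k" using False2 Suc.prems by auto
      then have "x \<le> beta S L k" using Phi_nn k by simp
      then have "win k (Gfam U L k x) S" using Suc.IH[of x] k \<open>x = ce C k\<close> by simp
      then show ?thesis using False Gfam_split0[where U=U and L=L and k=k and x=x] band by simp
    qed
  qed
qed

lemma stL_sub: "S \<subseteq> Es C" using stL_char Es_iff by auto

end

lemma stL_inj:
  assumes "cl C1 L" "cl C2 L" "length C1 = length C2" "cnt_e C1 = cnt_e C2" "stL L C1 = stL L C2"
  shows "C1 = C2"
proof -
  interpret c1: cl C1 L by fact
  interpret c2: cl C2 L by fact
  let ?n = "length C1"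
  have beq: "\<And>k. beta (stL L C1) L k = beta (stL L C2) L k" using assms(5) by simp
  have key: "\<And>j. j \<le> ?n \<Longrightarrow> ce C1 (?n - j) = ce C2 (?n - j)"
  proof -
    fix j show "j \<le> ?n \<Longrightarrow> ce C1 (?n - j) = ce C2 (?n - j)"
    proof (induction j)
      case 0 then show ?case using assms(3,4) by simp
    next
      case (Suc j)
      define k where "k = ?n - Suc j"
      have k: "k < ?n" "Suc k = ?n - j" using Suc.prems unfolding k_def by auto
      have X: "ce C1 (Suc k) = ce C2 (Suc k)" using Suc k by simp
      have k2: "k < length C2" using k assms(3) by simp
      have s1: "ce C1 (Suc k) = ce C1 k + (if C1 ! k then 1 else 0)" using ce_Suc[OF k(1)] .
      have s2: "ce C2 (Suc k) = ce C2 k + (if C2 ! k then 1 else 0)" using ce_Suc[OF k2] .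
      have "ce C1 k = ce C2 k"
      proof (cases "Suc k \<in> stL L C1")
        case True
        then have "C1 ! k" "C2 ! k" using c1.S_iff[OF k(1)] c2.S_iff[OF k2] assms(5) by auto
        then show ?thesis using X s1 s2 by simp
      next
        case False
        then have F2: "Suc k \<notin> stL L C2" using assms(5) by simp
        have m1: "C1 ! k \<Longrightarrow> marked C1 L (ce C1 k)" using c1.S_iff[OF k(1)] False by simp
        have m2: "C2 ! k \<Longrightarrow> marked C2 L (ce C2 k)" using c2.S_iff[OF k2] F2 by simp
        have p1: "ce C1 k \<le> beta (stL L C1) L k" using c1.Phi_nn k by simp
        have p2: "ce C2 k \<le> beta (stL L C2) L k" using c2.Phi_nn k k2 by simp
        show ?thesis
        proof (cases "C1 ! k"; cases "C2 ! k")
          assume a: "C1 ! k" "C2 ! k" then show ?thesis using X s1 s2 by simp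
        next
          assume a: "C1 ! k" "\<not> C2 ! k"
          have "beta (stL L C1) L k = ce C1 k" using c1.marked_beta[OF k(1) a(1) m1[OF a(1)]] .
          then show ?thesis using p2 beq[of k] X s1 s2 a by simp
        next
          assume a: "\<not> C1 ! k" "C2 ! k"
          have "beta (stL L C2) L k = ce C2 k" using c2.marked_beta[OF k2 a(2) m2[OF a(2)]] .
          then show ?thesis using p1 beq[of k] X s1 s2 a by simp
        next
          assume a: "\<not> C1 ! k" "\<not> C2 ! k" then show ?thesis using X s1 s2 by simp
        qed
      qed
      then show ?case using k(2) unfolding k_def by simp
    qed
  qed
  show ?thesis
  proof (rule nth_equalityI)
    show "length C1 = length C2" by fact
    fix k assume k: "k < length C1"
    have "ce C1 (Suc k) = ce C2 (Suc k)" "ce C1 k = ce C2 k"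
      using key[of "?n - Suc k"] key[of "?n - k"] k by auto
    then show "C1 ! k = C2 ! k" using ce_Suc[OF k] ce_Suc[of k C2] k assms(3) by (auto split: if_splits)
  qed
qed


lemma wa_refl: "weakly_above U U" unfolding weakly_above_def by simp

lemma interval_Gfam:
  assumes "U \<in> paths n d" "L \<in> paths n d"
  shows "Es ` interval_paths n d U L = Gfam U L n d"
proof -
  have "interval_paths n d U L = {p. length p = n \<and> cnt_e p = d \<and> (\<forall>i\<le>n. ce U i \<le> ce p i \<and> ce p i \<le> ce L i)}"
  proof (intro set_eqI iffI)
    fix p assume "p \<in> interval_paths n d U L"
    then show "p \<in> {p. length p = n \<and> cnt_e p = d \<and> (\<forall>i\<le>n. ce U i \<le> ce p i \<and> ce p i \<le> ce L i)}"
      unfolding interval_paths_def paths_def weakly_above_def by auto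
  next
    fix p assume p: "p \<in> {p. length p = n \<and> cnt_e p = d \<and> (\<forall>i\<le>n. ce U i \<le> ce p i \<and> ce p i \<le> ce L i)}"
    have "\<forall>k. ce U k \<le> ce p k \<and> ce p k \<le> ce L k"
    proof
      fix k show "ce U k \<le> ce p k \<and> ce p k \<le> ce L k"
      proof (cases "k \<le> n")
        case True then show ?thesis using p by simp
      next
        case False then show ?thesis using p assms unfolding paths_def by simp
      qed
    qed
    then show "p \<in> interval_paths n d U L" using p unfolding interval_paths_def paths_def weakly_above_def by auto
  qed
  then show ?thesis unfolding Gfam_def by simp
qed

lemma cl_of:
  assumes "C \<in> interval_paths n d U L" "L \<in> paths n d"
  shows "cl C L"
  using assms unfolding interval_paths_def paths_def cl_def by auto

lemma conj2:
  assumes U: "U \<in> paths n d" and L: "L \<in> paths n d" and UL: "weakly_above U L"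
  shows "S_lex (lattice_path_matroid n d U L) = stL L ` interval_paths n d U L"
proof -
  define F where "F = interval_paths n d U L"
  define V where "V = Es ` F"
  have lenF: "\<And>C. C \<in> F \<Longrightarrow> length C = n" unfolding F_def interval_paths_def paths_def by auto
  have cntF: "\<And>C. C \<in> F \<Longrightarrow> cnt_e C = d" unfolding F_def interval_paths_def paths_def by auto
  have VP: "V \<subseteq> Pow {1..n}" unfolding V_def using Es_sub lenF by fastforce
  have UF: "U \<in> F" unfolding F_def interval_paths_def using U UL wa_refl by auto
  then have Vne: "V \<noteq> {}" unfolding V_def by auto
  have finF: "finite F"
  proof -
    have "F \<subseteq> {xs. set xs \<subseteq> UNIV \<and> length xs = n}" using lenF by auto
    moreover have "finite {xs. set xs \<subseteq> (UNIV::bool set) \<and> length xs = n}" by (rule finite_lists_length_eq) simp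
    ultimately show ?thesis by (rule finite_subset)
  qed
  have SW: "S_lex (lattice_path_matroid n d U L) = Wset n V"
    unfolding lattice_path_matroid_def V_def F_def using S_lex_Wset VP Vne unfolding V_def F_def by simp
  have GV: "Gfam U L n d = V" unfolding V_def F_def using interval_Gfam[OF U L] by simp
  have sub: "stL L ` F \<subseteq> Wset n V"
  proof
    fix s assume "s \<in> stL L ` F"
    then obtain C where C: "C \<in> F" "s = stL L C" by blast
    interpret cl C L using cl_of C(1) L unfolding F_def by blast
    have Ub: "\<forall>i\<le>n. ce U i \<le> ce C i" using C(1) unfolding F_def interval_paths_def weakly_above_def by auto
    have ln: "length C = n" using lenF C(1) .
    have "win n (Gfam U L n d) (stL L C)"
      using win_G[OF Ub[folded ln], of n d] Phi_nn[of n] ln cntF[OF C(1)] by simp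
    moreover have "stL L C \<subseteq> {1..n}" using stL_sub Es_sub ln by blast
    ultimately show "s \<in> Wset n V" unfolding Wset_def C(2) GV by simp
  qed
  have injE: "inj_on Es F" using Es_inj lenF by (metis inj_onI)
  have injS: "inj_on (stL L) F"
  proof (rule inj_onI)
    fix C1 C2 assume "C1 \<in> F" "C2 \<in> F" "stL L C1 = stL L C2"
    then show "C1 = C2" using stL_inj[of C1 L C2] cl_of L lenF cntF unfolding F_def by metis
  qed
  have "card (stL L ` F) = card F" using injS by (rule card_image)
  also have "\<dots> = card V" unfolding V_def using injE by (rule card_image[symmetric])
  also have "\<dots> = card (Wset n V)" using card_Wset[OF VP] by simp
  finally have "stL L ` F = Wset n V" using sub finite_Wset by (metis card_subset_eq)
  then show ?thesis using SW F_def by simp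
qed


lemma cnt_e_update: "p < length xs \<Longrightarrow> cnt_e (xs[p := b]) + (if xs ! p then 1 else 0) = cnt_e xs + (if b then 1 else 0)"
proof (induction xs arbitrary: p)
  case Nil then show ?case by simp
next
  case (Cons a xs) then show ?case by (cases p) auto
qed

lemma ce_update:
  assumes "p < length C"
  shows "ce (C[p := b]) i + (if p < i \<and> C ! p then 1 else 0) = ce C i + (if p < i \<and> b then 1 else 0)"
proof (cases "p < i")
  case True
  have "take i (C[p := b]) = (take i C)[p := b]" by (rule take_update_swap)
  moreover have "p < length (take i C)" using True assms by simp
  moreover have "take i C ! p = C ! p" using True by simp
  ultimately show ?thesis using cnt_e_update[where p=p and xs="take i C" and b=b] True by simp
next
  case False
  then have "take i (C[p := b]) = take i C" by (simp add: take_update_cancel)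
  then show ?thesis using False by simp
qed

lemma wa_iff_le: "length A = n \<Longrightarrow> length B = n \<Longrightarrow> cnt_e A = cnt_e B \<Longrightarrow> weakly_above A B \<longleftrightarrow> (\<forall>i\<le>n. ce A i \<le> ce B i)"
  unfolding weakly_above_def by (metis le_cases take_all)

lemma Es_update2:
  assumes "p < length C" "q < length C" "p \<noteq> q"
  shows "Es (C[p := False, q := True]) = insert (Suc q) (Es C - {Suc p})"
  using assms unfolding Es_def by (auto simp: nth_list_update)

lemma exchange:
  assumes U: "U \<in> paths n d" and L: "L \<in> paths n d"
    and C1: "C1 \<in> interval_paths n d U L" and C2: "C2 \<in> interval_paths n d U L"
    and x: "x \<in> Es C1 - Es C2"
  shows "\<exists>y\<in>Es C2 - Es C1. insert y (Es C1 - {x}) \<in> Es ` interval_paths n d U L"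
proof -
  have l1: "length C1 = n" "cnt_e C1 = d" and l2: "length C2 = n" "cnt_e C2 = d"
    and lU: "length U = n" "cnt_e U = d" and lL: "length L = n" "cnt_e L = d"
    using C1 C2 U L unfolding interval_paths_def paths_def by auto
  have b1: "\<forall>i\<le>n. ce U i \<le> ce C1 i \<and> ce C1 i \<le> ce L i"
    using C1 unfolding interval_paths_def weakly_above_def by auto
  have b2: "\<forall>i\<le>n. ce U i \<le> ce C2 i \<and> ce C2 i \<le> ce L i"
    using C2 unfolding interval_paths_def weakly_above_def by auto
  have x1: "1 \<le> x" "x \<le> n" "C1 ! (x - 1)" "\<not> C2 ! (x - 1)" using x l1 l2 unfolding Es_def by auto
  define p where "p = x - 1"
  have p: "x = Suc p" "p < n" "C1 ! p" "\<not> C2 ! p" using x1 unfolding p_def by auto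
  let ?f1 = "\<lambda>i. ce C1 i" and ?f2 = "\<lambda>i. ce C2 i"
  have s1: "\<And>i. i < n \<Longrightarrow> ?f1 (Suc i) = ?f1 i + (if C1 ! i then 1 else 0)" using ce_Suc l1 by simp
  have s2: "\<And>i. i < n \<Longrightarrow> ?f2 (Suc i) = ?f2 i + (if C2 ! i then 1 else 0)" using ce_Suc l2 by simp
  have fn: "?f1 n = d" "?f2 n = d" using l1 l2 by auto
  have mk: "\<And>q. q < n \<Longrightarrow> q \<noteq> p \<Longrightarrow> \<not> C1 ! q \<Longrightarrow> C2 ! q \<Longrightarrow>
      (\<forall>i. p < i \<and> i \<le> q \<longrightarrow> ce U i < ce C1 i) \<Longrightarrow> (\<forall>i. q < i \<and> i \<le> p \<longrightarrow> ce C1 i < ce L i) \<Longrightarrow>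
      \<exists>y\<in>Es C2 - Es C1. insert y (Es C1 - {x}) \<in> Es ` interval_paths n d U L"
  proof -
    fix q assume q: "q < n" "q \<noteq> p" "\<not> C1 ! q" "C2 ! q"
      and lo: "\<forall>i. p < i \<and> i \<le> q \<longrightarrow> ce U i < ce C1 i" and hi: "\<forall>i. q < i \<and> i \<le> p \<longrightarrow> ce C1 i < ce L i"
    define C where "C = C1[p := False, q := True]"
    have lC: "length C = n" unfolding C_def using l1 by simp
    have cC: "\<And>i. ce C i + (if p < i then 1 else 0) = ce C1 i + (if q < i then 1 else 0)"
    proof -
      fix i
      have e1: "ce (C1[p := False]) i + (if p < i \<and> C1 ! p then 1 else 0) = ce C1 i + (if p < i \<and> False then 1 else 0)"
        using ce_update[where p=p and C=C1 and b=False and i=i] p l1 by simp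
      have e2: "ce ((C1[p := False])[q := True]) i + (if q < i \<and> C1[p := False] ! q then 1 else 0) = ce (C1[p := False]) i + (if q < i \<and> True then 1 else 0)"
        using ce_update[where p=q and C="C1[p := False]" and b=True and i=i] q l1 by simp
      have "C1[p := False] ! q = False" using q p l1 by (simp add: nth_list_update)
      then show "ce C i + (if p < i then 1 else 0) = ce C1 i + (if q < i then 1 else 0)"
        using e1 e2 p(3) unfolding C_def by simp
    qed
    have cnt: "cnt_e C = d" using cC[of n] lC l1 p q by simp
    have band: "\<forall>i\<le>n. ce U i \<le> ce C i \<and> ce C i \<le> ce L i"
    proof (intro allI impI)
      fix i assume i: "i \<le> n"
      show "ce U i \<le> ce C i \<and> ce C i \<le> ce L i"
      proof (cases "p < i \<and> i \<le> q")
        case True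
        then have "ce C i + 1 = ce C1 i" using cC[of i] by simp
        then show ?thesis using lo True b1 i by force
      next
        case F1: False
        show ?thesis
        proof (cases "q < i \<and> i \<le> p")
          case True
          then have "ce C i = ce C1 i + 1" using cC[of i] by simp
          then show ?thesis using hi True b1 i by force
        next
          case False
          then have "ce C i = ce C1 i" using cC[of i] F1 q(2) by (auto split: if_splits)
          then show ?thesis using b1 i by simp
        qed
      qed
    qed
    have "C \<in> interval_paths n d U L"
      unfolding interval_paths_def paths_def using lC cnt band wa_iff_le[OF lU(1) lC] wa_iff_le[OF lC lL(1)] lU lL by simp
    moreover have "Es C = insert (Suc q) (Es C1 - {x})" unfolding C_def using Es_update2 p q l1 by simp
    moreover have "Suc q \<in> Es C2 - Es C1" using q l1 l2 unfolding Es_def by auto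
    ultimately show "\<exists>y\<in>Es C2 - Es C1. insert y (Es C1 - {x}) \<in> Es ` interval_paths n d U L" by blast
  qed
  show ?thesis
  proof (cases "?f2 (Suc p) < ?f1 (Suc p)")
    case True
    have pn: "Suc p < n"
    proof (rule ccontr)
      assume "\<not> Suc p < n" then have "Suc p = n" using p by simp
      then show False using True fn by simp
    qed
    have ex: "\<exists>j. Suc p < j \<and> ?f1 j \<le> ?f2 j" using pn fn by (intro exI[of _ n]) simp
    define j where "j = (LEAST j. Suc p < j \<and> ?f1 j \<le> ?f2 j)"
    have j: "Suc p < j" "?f1 j \<le> ?f2 j" unfolding j_def using LeastI_ex[OF ex] by auto
    have jn: "j \<le> n" unfolding j_def using pn fn by (intro Least_le) simp
    have below: "\<And>i. Suc p \<le> i \<Longrightarrow> i < j \<Longrightarrow> ?f2 i < ?f1 i"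
    proof -
      fix i assume i: "Suc p \<le> i" "i < j"
      show "?f2 i < ?f1 i"
      proof (cases "i = Suc p")
        case True then show ?thesis using \<open>?f2 (Suc p) < ?f1 (Suc p)\<close> by simp
      next
        case False
        then have "Suc p < i" using i by simp
        then have "\<not> (?f1 i \<le> ?f2 i)" using not_less_Least[of i "\<lambda>j. Suc p < j \<and> ?f1 j \<le> ?f2 j"] i(2) unfolding j_def by blast
        then show ?thesis by simp
      qed
    qed
    define q where "q = j - 1"
    have qj: "Suc q = j" "q < n" "p < q" using j jn unfolding q_def by auto
    have fq: "?f2 q < ?f1 q" using below[of q] qj by simp
    have "?f1 (Suc q) \<le> ?f2 (Suc q)" using j qj by simp
    then have C1q: "\<not> C1 ! q" and C2q: "C2 ! q" using s1[OF qj(2)] s2[OF qj(2)] fq by (auto split: if_splits)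
    have lo: "\<forall>i. p < i \<and> i \<le> q \<longrightarrow> ce U i < ce C1 i"
    proof (intro allI impI)
      fix i assume "p < i \<and> i \<le> q"
      then have "?f2 i < ?f1 i" using below qj by simp
      moreover have "ce U i \<le> ?f2 i" using b2 \<open>p < i \<and> i \<le> q\<close> qj by simp
      ultimately show "ce U i < ce C1 i" by simp
    qed
    show ?thesis using mk[OF qj(2) _ C1q C2q lo] qj by simp
  next
    case False
    have pp: "?f1 p < ?f2 p" using s1[OF p(2)] s2[OF p(2)] p False by simp
    have p0: "0 < p" using pp by (cases p) auto
    have ex: "0 < p \<and> ?f2 0 \<le> ?f1 0" using p0 by simp
    define j where "j = (GREATEST j. j < p \<and> ?f2 j \<le> ?f1 j)"
    have j: "j < p" "?f2 j \<le> ?f1 j" unfolding j_def using GreatestI_nat[of "\<lambda>j. j < p \<and> ?f2 j \<le> ?f1 j" 0 p] ex by auto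
    have above: "\<And>i. j < i \<Longrightarrow> i \<le> p \<Longrightarrow> ?f1 i < ?f2 i"
    proof -
      fix i assume i: "j < i" "i \<le> p"
      show "?f1 i < ?f2 i"
      proof (cases "i = p")
        case True then show ?thesis using pp by simp
      next
        case False
        then have "i < p" using i by simp
        have "\<not> (?f2 i \<le> ?f1 i)"
        proof
          assume "?f2 i \<le> ?f1 i"
          then have "i \<le> j" unfolding j_def using \<open>i < p\<close> by (intro Greatest_le_nat[of _ i p]) auto
          then show False using i by simp
        qed
        then show ?thesis by simp
      qed
    qed
    define q where "q = j"
    have qn: "q < n" "q < p" using j p unfolding q_def by auto
    have "?f1 (Suc q) < ?f2 (Suc q)" using above[of "Suc q"] qn unfolding q_def by simp
    then have C1q: "\<not> C1 ! q" and C2q: "C2 ! q" using s1[OF qn(1)] s2[OF qn(1)] j unfolding q_def by (auto split: if_splits)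
    have hi: "\<forall>i. q < i \<and> i \<le> p \<longrightarrow> ce C1 i < ce L i"
    proof (intro allI impI)
      fix i assume "q < i \<and> i \<le> p"
      then have "?f1 i < ?f2 i" using above unfolding q_def by simp
      moreover have "?f2 i \<le> ce L i" using b2 \<open>q < i \<and> i \<le> p\<close> p by simp
      ultimately show "ce C1 i < ce L i" by simp
    qed
    show ?thesis using mk[OF qn(1) _ C1q C2q _ hi] qn by simp
  qed
qed

lemma lpm_matroid:
  assumes U: "U \<in> paths n d" and L: "L \<in> paths n d" and UL: "weakly_above U L"
  shows "is_matroid (lattice_path_matroid n d U L)"
proof -
  have UF: "U \<in> interval_paths n d U L" unfolding interval_paths_def using U UL wa_refl by auto
  have sub: "\<forall>B\<in>Es ` interval_paths n d U L. B \<subseteq> {1..n}"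
    using Es_sub unfolding interval_paths_def paths_def by fastforce
  show ?thesis unfolding is_matroid_def lattice_path_matroid_def ground_def bases_def
    using UF sub exchange[OF U L] by auto
qed


definition path_of :: "(nat \<Rightarrow> nat) \<Rightarrow> nat \<Rightarrow> bool list" where
  "path_of f m = map (\<lambda>i. f i < f (Suc i)) [0..<m]"

lemma length_path_of[simp]: "length (path_of f m) = m" unfolding path_of_def by simp

lemma ce_path_of:
  assumes "f 0 = 0" "\<forall>i<m. f i \<le> f (Suc i) \<and> f (Suc i) \<le> Suc (f i)"
  shows "i \<le> m \<Longrightarrow> ce (path_of f m) i = f i"
proof (induction i)
  case 0 then show ?case using assms by simp
next
  case (Suc i)
  then have i: "i < m" by simp
  have "ce (path_of f m) (Suc i) = ce (path_of f m) i + (if path_of f m ! i then 1 else 0)"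
    using ce_Suc[of i "path_of f m"] i by simp
  also have "\<dots> = f i + (if f i < f (Suc i) then 1 else 0)" using Suc i unfolding path_of_def by simp
  also have "\<dots> = f (Suc i)" using assms(2) i by force
  finally show ?case .
qed

lemma cnt_path_of:
  assumes "f 0 = 0" "\<forall>i<m. f i \<le> f (Suc i) \<and> f (Suc i) \<le> Suc (f i)"
  shows "cnt_e (path_of f m) = f m"
  using ce_path_of[OF assms, of m] by simp

lemma ce_ge_low: "length C = m \<Longrightarrow> i \<le> m \<Longrightarrow> cnt_e C \<le> ce C i + (m - i)"
  using ce_diff_le[of i m C] by simp

lemma ce_le_cnt: "ce C i \<le> cnt_e C"
  using ce_mono[of i "length C" C] by (cases "i \<le> length C") auto

lemma ce_step: "ce C i \<le> ce C (Suc i) \<and> ce C (Suc i) \<le> Suc (ce C i)"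
  using ce_mono[of i "Suc i" C] ce_Suc_le[of i C] by simp

lemma interval_snoc:
  assumes U: "U \<in> paths (Suc m) d" and L: "L \<in> paths (Suc m) d"
  shows "C' @ [b] \<in> interval_paths (Suc m) d U L \<longleftrightarrow>
    length C' = m \<and> cnt_e C' + (if b then 1 else 0) = d \<and> (\<forall>i\<le>m. ce U i \<le> ce C' i \<and> ce C' i \<le> ce L i)"
proof -
  have lU: "length U = Suc m" "cnt_e U = d" and lL: "length L = Suc m" "cnt_e L = d" using U L unfolding paths_def by auto
  show ?thesis
  proof
    assume h: "C' @ [b] \<in> interval_paths (Suc m) d U L"
    then have l: "length C' = m" "cnt_e C' + (if b then 1 else 0) = d" unfolding interval_paths_def paths_def by auto
    have "\<forall>i. ce U i \<le> ce (C' @ [b]) i \<and> ce (C' @ [b]) i \<le> ce L i" using h unfolding interval_paths_def weakly_above_def by auto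
    have tk: "\<And>i. i \<le> m \<Longrightarrow> take i (C' @ [b]) = take i C'" using l by simp
    have "\<forall>i\<le>m. ce U i \<le> ce C' i \<and> ce C' i \<le> ce L i"
    proof (intro allI impI)
      fix i assume "i \<le> m"
      then show "ce U i \<le> ce C' i \<and> ce C' i \<le> ce L i" using \<open>\<forall>i. ce U i \<le> ce (C' @ [b]) i \<and> ce (C' @ [b]) i \<le> ce L i\<close> tk by metis
    qed
    then show "length C' = m \<and> cnt_e C' + (if b then 1 else 0) = d \<and> (\<forall>i\<le>m. ce U i \<le> ce C' i \<and> ce C' i \<le> ce L i)" using l by simp
  next
    assume h: "length C' = m \<and> cnt_e C' + (if b then 1 else 0) = d \<and> (\<forall>i\<le>m. ce U i \<le> ce C' i \<and> ce C' i \<le> ce L i)"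
    have "\<forall>i. ce U i \<le> ce (C' @ [b]) i \<and> ce (C' @ [b]) i \<le> ce L i"
    proof
      fix i show "ce U i \<le> ce (C' @ [b]) i \<and> ce (C' @ [b]) i \<le> ce L i"
      proof (cases "i \<le> m")
        case True then show ?thesis using h by simp
      next
        case False then show ?thesis using h lU lL by simp
      qed
    qed
    then show "C' @ [b] \<in> interval_paths (Suc m) d U L" using h unfolding interval_paths_def paths_def weakly_above_def by auto
  qed
qed

lemma F0_repr:
  assumes U: "U \<in> paths (Suc m) d" and L: "L \<in> paths (Suc m) d"
    and ne: "C0 @ [False] \<in> interval_paths (Suc m) d U L"
  shows "\<exists>U0 L0. U0 \<in> paths m d \<and> L0 \<in> paths m d \<and> weakly_above U0 L0 \<and>
     {C'. C' @ [False] \<in> interval_paths (Suc m) d U L} = interval_paths m d U0 L0 \<and> L0 = take m L"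
proof -
  have lU: "length U = Suc m" "cnt_e U = d" and lL: "length L = Suc m" "cnt_e L = d" using U L unfolding paths_def by auto
  have c0: "length C0 = m" "cnt_e C0 = d" "\<forall>i\<le>m. ce U i \<le> ce C0 i \<and> ce C0 i \<le> ce L i"
    using ne interval_snoc[OF U L] by auto
  have dm: "d \<le> m" using c0 cnt_e_le by metis
  define g where "g i = max (ce U i) (d + i - m)" for i
  have g0: "g 0 = 0" unfolding g_def using dm by simp
  have gs: "\<forall>i<m. g i \<le> g (Suc i) \<and> g (Suc i) \<le> Suc (g i)"
  proof (intro allI impI)
    fix i assume "i < m"
    have "ce U i \<le> ce U (Suc i)" "ce U (Suc i) \<le> Suc (ce U i)" using ce_step[where C=U and i=i] by auto
    then show "g i \<le> g (Suc i) \<and> g (Suc i) \<le> Suc (g i)" unfolding g_def max_def by arith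
  qed
  define U0 where "U0 = path_of g m"
  define L0 where "L0 = take m L"
  have ceU0: "\<And>i. i \<le> m \<Longrightarrow> ce U0 i = g i" unfolding U0_def using ce_path_of[OF g0 gs] by blast
  have ceL0: "\<And>i. i \<le> m \<Longrightarrow> ce L0 i = ce L i" unfolding L0_def by (simp add: min_def)
  have Lm: "ce L m = d"
  proof -
    have "ce C0 m = d" using c0(1,2) by simp
    then have "d \<le> ce L m" using c0(3) by (metis order_refl)
    moreover have "ce L m \<le> d" using ce_le_cnt[of m L] lL by simp
    ultimately show ?thesis by simp
  qed
  have U0p: "U0 \<in> paths m d" unfolding paths_def U0_def using cnt_path_of[OF g0 gs] dm unfolding g_def
    using ce_le_cnt[of m U] lU by simp
  have L0p: "L0 \<in> paths m d" unfolding paths_def L0_def using lL Lm by simp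
  have band: "\<And>C'. length C' = m \<Longrightarrow> cnt_e C' = d \<Longrightarrow>
      (\<forall>i\<le>m. ce U i \<le> ce C' i \<and> ce C' i \<le> ce L i) \<longleftrightarrow> (\<forall>i\<le>m. ce U0 i \<le> ce C' i \<and> ce C' i \<le> ce L0 i)"
  proof -
    fix C' :: "bool list" assume l: "length C' = m" "cnt_e C' = d"
    have low: "\<And>i. i \<le> m \<Longrightarrow> d + i - m \<le> ce C' i" using ce_ge_low[OF l(1)] l(2) by fastforce
    show "(\<forall>i\<le>m. ce U i \<le> ce C' i \<and> ce C' i \<le> ce L i) \<longleftrightarrow> (\<forall>i\<le>m. ce U0 i \<le> ce C' i \<and> ce C' i \<le> ce L0 i)"
      using ceU0 ceL0 low unfolding g_def by auto
  qed
  have eq: "{C'. C' @ [False] \<in> interval_paths (Suc m) d U L} = interval_paths m d U0 L0"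
  proof (intro set_eqI iffI)
    fix C' assume "C' \<in> {C'. C' @ [False] \<in> interval_paths (Suc m) d U L}"
    then have h: "length C' = m" "cnt_e C' = d" "\<forall>i\<le>m. ce U i \<le> ce C' i \<and> ce C' i \<le> ce L i"
      using interval_snoc[OF U L] by auto
    then have "\<forall>i\<le>m. ce U0 i \<le> ce C' i \<and> ce C' i \<le> ce L0 i" using band by blast
    then show "C' \<in> interval_paths m d U0 L0" unfolding interval_paths_def paths_def
      using wa_iff_le[of U0 m C'] wa_iff_le[of C' m L0] h U0p L0p unfolding paths_def by auto
  next
    fix C' assume h: "C' \<in> interval_paths m d U0 L0"
    then have l: "length C' = m" "cnt_e C' = d" unfolding interval_paths_def paths_def by auto
    have "\<forall>i\<le>m. ce U0 i \<le> ce C' i \<and> ce C' i \<le> ce L0 i" using h unfolding interval_paths_def weakly_above_def by auto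
    then have "\<forall>i\<le>m. ce U i \<le> ce C' i \<and> ce C' i \<le> ce L i" using band l by blast
    then show "C' \<in> {C'. C' @ [False] \<in> interval_paths (Suc m) d U L}" using interval_snoc[OF U L] l by simp
  qed
  have "C0 \<in> interval_paths m d U0 L0" using eq ne by blast
  then have "weakly_above U0 L0" unfolding interval_paths_def weakly_above_def using le_trans by blast
  then show ?thesis using U0p L0p eq L0_def by blast
qed

lemma F1_repr:
  assumes U: "U \<in> paths (Suc m) d" and L: "L \<in> paths (Suc m) d"
    and ne: "C0 @ [True] \<in> interval_paths (Suc m) d U L"
  shows "\<exists>U1 L1. U1 \<in> paths m (d - 1) \<and> L1 \<in> paths m (d - 1) \<and> weakly_above U1 L1 \<and>
     {C'. C' @ [True] \<in> interval_paths (Suc m) d U L} = interval_paths m (d - 1) U1 L1 \<and>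
     (\<forall>i\<le>m. ce L1 i = min (ce L i) (d - 1))"
proof -
  have lU: "length U = Suc m" "cnt_e U = d" and lL: "length L = Suc m" "cnt_e L = d" using U L unfolding paths_def by auto
  have c0: "length C0 = m" "cnt_e C0 + 1 = d" "\<forall>i\<le>m. ce U i \<le> ce C0 i \<and> ce C0 i \<le> ce L i"
    using ne interval_snoc[OF U L] by auto
  define g where "g i = min (ce L i) (d - 1)" for i
  have g0: "g 0 = 0" unfolding g_def by simp
  have gs: "\<forall>i<m. g i \<le> g (Suc i) \<and> g (Suc i) \<le> Suc (g i)"
  proof (intro allI impI)
    fix i assume "i < m"
    have "ce L i \<le> ce L (Suc i)" "ce L (Suc i) \<le> Suc (ce L i)" using ce_step[where C=L and i=i] by auto
    then show "g i \<le> g (Suc i) \<and> g (Suc i) \<le> Suc (g i)" unfolding g_def min_def by arith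
  qed
  define L1 where "L1 = path_of g m"
  define U1 where "U1 = take m U"
  have ceL1: "\<And>i. i \<le> m \<Longrightarrow> ce L1 i = g i" unfolding L1_def using ce_path_of[OF g0 gs] by blast
  have ceU1: "\<And>i. i \<le> m \<Longrightarrow> ce U1 i = ce U i" unfolding U1_def by (simp add: min_def)
  have Um: "ce U m = d - 1"
  proof -
    have "ce C0 m = d - 1" using c0(1,2) by simp
    then have "ce U m \<le> d - 1" using c0(3) by (metis order_refl)
    moreover have "ce U (Suc m) \<le> Suc (ce U m)" by (rule ce_Suc_le)
    ultimately show ?thesis using lU by simp
  qed
  have Lm: "d - 1 \<le> ce L m"
  proof -
    have "ce C0 m = d - 1" using c0(1,2) by simp
    then show ?thesis using c0(3) by (metis order_refl)
  qed
  have U1p: "U1 \<in> paths m (d - 1)" unfolding paths_def U1_def using lU Um by simp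
  have L1p: "L1 \<in> paths m (d - 1)" unfolding paths_def L1_def using cnt_path_of[OF g0 gs] Lm unfolding g_def by simp
  have band: "\<And>C'. length C' = m \<Longrightarrow> cnt_e C' = d - 1 \<Longrightarrow>
      (\<forall>i\<le>m. ce U i \<le> ce C' i \<and> ce C' i \<le> ce L i) \<longleftrightarrow> (\<forall>i\<le>m. ce U1 i \<le> ce C' i \<and> ce C' i \<le> ce L1 i)"
  proof -
    fix C' :: "bool list" assume l: "length C' = m" "cnt_e C' = d - 1"
    have up: "\<And>i. ce C' i \<le> d - 1" using ce_le_cnt l by metis
    show "(\<forall>i\<le>m. ce U i \<le> ce C' i \<and> ce C' i \<le> ce L i) \<longleftrightarrow> (\<forall>i\<le>m. ce U1 i \<le> ce C' i \<and> ce C' i \<le> ce L1 i)"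
      using ceU1 ceL1 up unfolding g_def by auto
  qed
  have d1: "1 \<le> d" using c0 by simp
  have eq: "{C'. C' @ [True] \<in> interval_paths (Suc m) d U L} = interval_paths m (d - 1) U1 L1"
  proof (intro set_eqI iffI)
    fix C' assume "C' \<in> {C'. C' @ [True] \<in> interval_paths (Suc m) d U L}"
    then have h: "length C' = m" "cnt_e C' = d - 1" "\<forall>i\<le>m. ce U i \<le> ce C' i \<and> ce C' i \<le> ce L i"
      using interval_snoc[OF U L] by auto
    then have "\<forall>i\<le>m. ce U1 i \<le> ce C' i \<and> ce C' i \<le> ce L1 i" using band by blast
    then show "C' \<in> interval_paths m (d - 1) U1 L1" unfolding interval_paths_def paths_def
      using wa_iff_le[of U1 m C'] wa_iff_le[of C' m L1] h U1p L1p unfolding paths_def by auto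
  next
    fix C' assume h: "C' \<in> interval_paths m (d - 1) U1 L1"
    then have l: "length C' = m" "cnt_e C' = d - 1" unfolding interval_paths_def paths_def by auto
    have "\<forall>i\<le>m. ce U1 i \<le> ce C' i \<and> ce C' i \<le> ce L1 i" using h unfolding interval_paths_def weakly_above_def by auto
    then have "\<forall>i\<le>m. ce U i \<le> ce C' i \<and> ce C' i \<le> ce L i" using band l by blast
    then show "C' \<in> {C'. C' @ [True] \<in> interval_paths (Suc m) d U L}" using interval_snoc[OF U L] l d1 by simp
  qed
  have "C0 \<in> interval_paths m (d - 1) U1 L1" using eq ne by blast
  then have "weakly_above U1 L1" unfolding interval_paths_def weakly_above_def using le_trans by blast
  then show ?thesis using U1p L1p eq ceL1 unfolding g_def by blast
qed


lemma epos_min: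
  assumes lL': "length L' = m" and c: "\<forall>i\<le>m. ce L' i = min (ce L i) K"
    and aK: "a < K" and am: "a < ce L m"
  shows "epos L' a = epos L a"
proof -
  have aL: "a < cnt_e L" using am ce_le_cnt[of m L] by simp
  define p where "p = epos L a"
  have pm: "p < m" unfolding p_def using epos_lt_iff[OF aL] am by simp
  have e: "ce L p = a" "ce L (Suc p) = Suc a" unfolding p_def using epos_props[OF aL] ce_epos_Suc[OF aL] by auto
  have "ce L' p = a" "ce L' (Suc p) = Suc a" using c pm e aK by auto
  then have "L' ! p" using ce_Suc[of p L'] pm lL' by (auto split: if_splits)
  then show ?thesis unfolding p_def[symmetric] using pm lL' \<open>ce L' p = a\<close> by (intro epos_unique) auto
qed

lemma stL_trunc:
  assumes clC: "cl (C' @ [b]) L" and lC': "length C' = m" and clC': "cl C' L'"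
    and ep: "\<forall>a<cnt_e C'. epos L' a = epos L a"
  shows "stL L' C' = stL L (C' @ [b]) - {Suc m}"
proof -
  define C where "C = C' @ [b]"
  interpret A: cl C L using clC C_def by simp
  interpret B: cl C' L' by fact
  have lL': "length L' = m" using B.len lC' by simp
  have tk: "\<And>p. p \<le> m \<Longrightarrow> take p C = take p C'" unfolding C_def using lC' by simp
  have cntC: "cnt_e C = cnt_e C' + (if b then 1 else 0)" unfolding C_def by simp
  have eC: "\<And>a. a < cnt_e C' \<Longrightarrow> epos C' a = epos C a"
  proof -
    fix a assume a: "a < cnt_e C'"
    note e = epos_props[OF a]
    have "C ! (epos C' a) = C' ! (epos C' a)" unfolding C_def using e lC' by (simp add: nth_append)
    moreover have "ce C (epos C' a) = ce C' (epos C' a)" using tk e lC' by simp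
    ultimately show "epos C' a = epos C a" using e lC' unfolding C_def by (intro epos_unique[symmetric]) auto
  qed
  have hCe: "\<And>a. a < cnt_e C' \<Longrightarrow> hC C' a = hC C a"
    unfolding hC_def using eC epos_props lC' tk by (metis less_imp_le_nat)
  have kDe: "\<And>a. a < cnt_e C' \<Longrightarrow> kD C' L' a = kD C L a"
  proof -
    fix a assume a: "a < cnt_e C'"
    then have a': "a < cnt_e L'" using B.cntL by simp
    have "epos L' a < m" using epos_props(1)[OF a'] lL' by simp
    then show "kD C' L' a = kD C L a" unfolding kD_def using ep a tk by simp
  qed
  have bce: "\<And>a. a \<le> cnt_e C' \<Longrightarrow> bcol C' L' a = bcol C L a"
  proof -
    fix a show "a \<le> cnt_e C' \<Longrightarrow> bcol C' L' a = bcol C L a"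
    proof (induction a)
      case 0 then show ?case by simp
    next
      case (Suc a)
      then have "a < cnt_e C'" by simp
      then show ?case using Suc hCe kDe by simp
    qed
  qed
  have me: "\<And>a. a < cnt_e C' \<Longrightarrow> marked C' L' a = marked C L a"
    unfolding marked_def ccol_def using hCe kDe bce by simp
  have epm: "\<And>a. a < cnt_e C' \<Longrightarrow> epos C a < m" using eC epos_props lC' by metis
  have last: "b \<Longrightarrow> epos C (cnt_e C') = m"
    unfolding C_def using lC' by (intro epos_unique) (auto simp: nth_append)
  have "stL L' C' = {Suc (epos C' a) | a. a < cnt_e C' \<and> \<not> marked C' L' a}" using B.stL_char .
  also have "\<dots> = {Suc (epos C a) | a. a < cnt_e C' \<and> \<not> marked C L a}" using eC me by metis
  also have "\<dots> = {Suc (epos C a) | a. a < cnt_e C \<and> \<not> marked C L a} - {Suc m}"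
  proof (intro set_eqI iffI)
    fix i assume "i \<in> {Suc (epos C a) | a. a < cnt_e C' \<and> \<not> marked C L a}"
    then obtain a where a: "i = Suc (epos C a)" "a < cnt_e C'" "\<not> marked C L a" by blast
    then show "i \<in> {Suc (epos C a) | a. a < cnt_e C \<and> \<not> marked C L a} - {Suc m}"
      using epm[OF a(2)] cntC by auto
  next
    fix i assume "i \<in> {Suc (epos C a) | a. a < cnt_e C \<and> \<not> marked C L a} - {Suc m}"
    then obtain a where a: "i = Suc (epos C a)" "a < cnt_e C" "\<not> marked C L a" "i \<noteq> Suc m" by blast
    have "a < cnt_e C'"
    proof (rule ccontr)
      assume "\<not> a < cnt_e C'"
      then have "b" "a = cnt_e C'" using a(2) cntC by (auto split: if_splits)
      then show False using last a by simp
    qed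
    then show "i \<in> {Suc (epos C a) | a. a < cnt_e C' \<and> \<not> marked C L a}" using a by blast
  qed
  also have "\<dots> = stL L C - {Suc m}" using A.stL_char by simp
  finally show ?thesis unfolding C_def .
qed


lemma snoc_split: "length C = Suc m \<Longrightarrow> C = take m C @ [C ! m]"
proof -
  assume "length C = Suc m"
  then have "take (Suc m) C = take m C @ [C ! m]" using take_Suc_conv_app_nth[of m C] by simp
  then show ?thesis using \<open>length C = Suc m\<close> by simp
qed

lemma Es_snoc_F: "length C' = m \<Longrightarrow> Es (C' @ [False]) = Es C'" using Es_snoc by simp
lemma Es_snoc_T: "length C' = m \<Longrightarrow> Es (C' @ [True]) - {Suc m} = Es C'"
  using Es_snoc Es_sub by fastforce
lemma Suc_in_Es: "length C = Suc m \<Longrightarrow> Suc m \<in> Es C \<longleftrightarrow> C ! m" unfolding Es_def by auto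

lemma mdelete_lpm:
  assumes U: "U \<in> paths (Suc m) d" and L: "L \<in> paths (Suc m) d"
    and ne: "C0 @ [False] \<in> interval_paths (Suc m) d U L"
    and eq: "{C'. C' @ [False] \<in> interval_paths (Suc m) d U L} = interval_paths m d U0 L0"
  shows "mdelete (lattice_path_matroid (Suc m) d U L) (Suc m) = lattice_path_matroid m d U0 L0"
proof -
  let ?F = "interval_paths (Suc m) d U L"
  have lenF: "\<And>C. C \<in> ?F \<Longrightarrow> length C = Suc m" unfolding interval_paths_def paths_def by auto
  have l0: "length C0 = m" using lenF[OF ne] by simp
  have notall: "\<not> (\<forall>B\<in>Es ` ?F. Suc m \<in> B)"
  proof -
    have "Es (C0 @ [False]) \<in> Es ` ?F" using ne by (rule imageI)
    moreover have "Suc m \<notin> Es (C0 @ [False])" using Es_snoc_F[OF l0] Es_sub[of C0] l0 by auto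
    ultimately show ?thesis by blast
  qed
  have "{B \<in> Es ` ?F. Suc m \<notin> B} = Es ` interval_paths m d U0 L0"
  proof (intro set_eqI iffI)
    fix B assume "B \<in> {B \<in> Es ` ?F. Suc m \<notin> B}"
    then obtain C where C: "C \<in> ?F" "B = Es C" "Suc m \<notin> B" by blast
    have lC: "length C = Suc m" using lenF C(1) .
    have Cm: "\<not> C ! m" using C Suc_in_Es[OF lC] by simp
    have sp: "C = take m C @ [False]" using snoc_split[OF lC] Cm by simp
    have "take m C @ [False] \<in> ?F" using C(1) sp by (metis)
    then have "take m C \<in> interval_paths m d U0 L0" using eq by blast
    moreover have "Es C = Es (take m C @ [False])" by (rule arg_cong[where f=Es]) (rule sp)
    moreover have "length (take m C) = m" using lC by simp
    ultimately have "take m C \<in> interval_paths m d U0 L0 \<and> B = Es (take m C)" using C(2) Es_snoc_F by metis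
    then show "B \<in> Es ` interval_paths m d U0 L0" by blast
  next
    fix B assume "B \<in> Es ` interval_paths m d U0 L0"
    then obtain C' where C': "C' \<in> interval_paths m d U0 L0" "B = Es C'" by blast
    have "C' @ [False] \<in> ?F" using C' eq by blast
    moreover have lC': "length C' = m" using C' unfolding interval_paths_def paths_def by simp
    moreover have "Suc m \<notin> Es (C' @ [False])" using Es_snoc_F[OF lC'] Es_sub[of C'] lC' by auto
    moreover have "B = Es (C' @ [False])" using Es_snoc_F[OF lC'] C'(2) by simp
    ultimately show "B \<in> {B \<in> Es ` ?F. Suc m \<notin> B}" by blast
  qed
  moreover have "{1..Suc m} - {Suc m} = {1..m}" by auto
  moreover have bM: "bases (lattice_path_matroid (Suc m) d U L) = Es ` ?F" "ground (lattice_path_matroid (Suc m) d U L) = {1..Suc m}"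
    by (simp_all add: lattice_path_matroid_def bases_def ground_def)
  moreover have "mdelete (lattice_path_matroid (Suc m) d U L) (Suc m) = ({1..Suc m} - {Suc m}, {B \<in> Es ` ?F. Suc m \<notin> B})"
    unfolding mdelete_def bM by (simp only: if_not_P[OF notall])
  ultimately show ?thesis unfolding lattice_path_matroid_def by simp
qed

lemma mcontract_lpm:
  assumes U: "U \<in> paths (Suc m) d" and L: "L \<in> paths (Suc m) d"
    and ne: "C0 @ [True] \<in> interval_paths (Suc m) d U L"
    and eq: "{C'. C' @ [True] \<in> interval_paths (Suc m) d U L} = interval_paths m d' U1 L1"
  shows "mcontract (lattice_path_matroid (Suc m) d U L) (Suc m) = lattice_path_matroid m d' U1 L1"
proof -
  let ?F = "interval_paths (Suc m) d U L"
  have lenF: "\<And>C. C \<in> ?F \<Longrightarrow> length C = Suc m" unfolding interval_paths_def paths_def by auto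
  have l0: "length C0 = m" using lenF[OF ne] by simp
  have notall: "\<not> (\<forall>B\<in>Es ` ?F. Suc m \<notin> B)"
  proof -
    have "Es (C0 @ [True]) \<in> Es ` ?F" using ne by (rule imageI)
    moreover have "Suc m \<in> Es (C0 @ [True])" using Es_snoc[of C0 True] l0 by simp
    ultimately show ?thesis by blast
  qed
  have "(\<lambda>B. B - {Suc m}) ` {B \<in> Es ` ?F. Suc m \<in> B} = Es ` interval_paths m d' U1 L1"
  proof (intro set_eqI iffI)
    fix B assume "B \<in> (\<lambda>B. B - {Suc m}) ` {B \<in> Es ` ?F. Suc m \<in> B}"
    then obtain C where C: "C \<in> ?F" "B = Es C - {Suc m}" "Suc m \<in> Es C" by blast
    have lC: "length C = Suc m" using lenF C(1) .
    have Cm: "C ! m" using C Suc_in_Es[OF lC] by simp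
    have sp: "C = take m C @ [True]" using snoc_split[OF lC] Cm by simp
    have "take m C @ [True] \<in> ?F" using C(1) sp by (metis)
    then have "take m C \<in> interval_paths m d' U1 L1" using eq by blast
    moreover have "Es C = Es (take m C @ [True])" by (rule arg_cong[where f=Es]) (rule sp)
    moreover have "length (take m C) = m" using lC by simp
    ultimately have "take m C \<in> interval_paths m d' U1 L1 \<and> B = Es (take m C)" using C(2) Es_snoc_T by metis
    then show "B \<in> Es ` interval_paths m d' U1 L1" by blast
  next
    fix B assume "B \<in> Es ` interval_paths m d' U1 L1"
    then obtain C' where C': "C' \<in> interval_paths m d' U1 L1" "B = Es C'" by blast
    have CF: "C' @ [True] \<in> ?F" using C' eq by blast
    have lC': "length C' = m" using C' unfolding interval_paths_def paths_def by simp
    have "Suc m \<in> Es (C' @ [True])" using Es_snoc[of C' True] lC' by simp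
    moreover have "B = Es (C' @ [True]) - {Suc m}" using Es_snoc_T[OF lC'] C' by simp
    ultimately show "B \<in> (\<lambda>B. B - {Suc m}) ` {B \<in> Es ` ?F. Suc m \<in> B}" using CF by blast
  qed
  moreover have "{1..Suc m} - {Suc m} = {1..m}" by auto
  moreover have bM: "bases (lattice_path_matroid (Suc m) d U L) = Es ` ?F" "ground (lattice_path_matroid (Suc m) d U L) = {1..Suc m}"
    by (simp_all add: lattice_path_matroid_def bases_def ground_def)
  moreover have "mcontract (lattice_path_matroid (Suc m) d U L) (Suc m) = ({1..Suc m} - {Suc m}, (\<lambda>B. B - {Suc m}) ` {B \<in> Es ` ?F. Suc m \<in> B})"
    unfolding mcontract_def bM by (simp only: if_not_P[OF notall])
  ultimately show ?thesis unfolding lattice_path_matroid_def by simp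
qed

lemma Lam_props:
  assumes "is_Lambda_family Lam" "is_matroid M" "ground M \<noteq> {}" "B \<in> bases M"
  shows "Lam M B \<subseteq> B"
    "Max (ground M) \<notin> B \<Longrightarrow> Lam M B = Lam (mdelete M (Max (ground M))) B"
    "Max (ground M) \<in> B \<Longrightarrow> Lam M B - {Max (ground M)} = Lam (mcontract M (Max (ground M))) (B - {Max (ground M)})"
  using assms unfolding is_Lambda_family_def by blast+

lemma Lam_bij: "is_Lambda_family Lam \<Longrightarrow> is_matroid M \<Longrightarrow> bij_betw (Lam M) (bases M) (S_lex M)"
  unfolding is_Lambda_family_def by blast

lemma conj1:
  assumes Lam: "is_Lambda_family Lam"
  shows "U \<in> paths n d \<Longrightarrow> L \<in> paths n d \<Longrightarrow> weakly_above U L \<Longrightarrow> C \<in> interval_paths n d U L \<Longrightarrow>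
         stL L C = Lam (lattice_path_matroid n d U L) (Es C)"
proof (induction n arbitrary: d U L C)
  case 0
  let ?M = "lattice_path_matroid 0 d U L"
  have mat: "is_matroid ?M" using lpm_matroid 0 by blast
  have C0: "C = []" using 0 unfolding interval_paths_def paths_def by auto
  have "Es C \<in> bases ?M" using 0 unfolding lattice_path_matroid_def bases_def by simp
  then have "Lam ?M (Es C) \<in> S_lex ?M" using Lam_bij[OF Lam mat] bij_betwE by blast
  then have "Lam ?M (Es C) = {}" unfolding S_lex_def lattice_path_matroid_def ground_def by simp
  moreover have "stL L C = {}" unfolding stL_def Es_def C0 by simp
  ultimately show ?case by simp
next
  case (Suc m)
  let ?M = "lattice_path_matroid (Suc m) d U L"
  let ?F = "interval_paths (Suc m) d U L"
  have mat: "is_matroid ?M" using lpm_matroid Suc.prems by blast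
  have mx: "Max {1..Suc m} = Suc m" by (rule Max_eqI) auto
  have gr: "ground ?M = {1..Suc m}" "ground ?M \<noteq> {}" "Max (ground ?M) = Suc m"
    unfolding lattice_path_matroid_def ground_def using mx by auto
  have lenF: "\<And>C. C \<in> ?F \<Longrightarrow> length C = Suc m" unfolding interval_paths_def paths_def by auto
  have cntF: "\<And>C. C \<in> ?F \<Longrightarrow> cnt_e C = d" unfolding interval_paths_def paths_def by auto
  have baseF: "\<And>C. C \<in> ?F \<Longrightarrow> Es C \<in> bases ?M" unfolding lattice_path_matroid_def bases_def by simp
  have lL: "length L = Suc m" "cnt_e L = d" using Suc.prems unfolding paths_def by auto
  have Pr: "U \<in> paths (Suc m) d" "L \<in> paths (Suc m) d" using Suc.prems by auto
  have claimA: "\<And>C. C \<in> ?F \<Longrightarrow> \<not> C ! m \<Longrightarrow> stL L C = Lam ?M (Es C)"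
  proof -
    fix C assume C: "C \<in> ?F" "\<not> C ! m"
    define C' where "C' = take m C"
    have lC: "length C = Suc m" using lenF C(1) .
    have sp: "C = C' @ [False]" unfolding C'_def using snoc_split[OF lC] C(2) by simp
    have lC': "length C' = m" unfolding C'_def using lC by simp
    obtain U0 L0 where UL0: "U0 \<in> paths m d" "L0 \<in> paths m d" "weakly_above U0 L0"
      "{C'. C' @ [False] \<in> ?F} = interval_paths m d U0 L0" "L0 = take m L"
      using F0_repr[OF Pr, of C'] C sp by metis
    have C'F: "C' \<in> interval_paths m d U0 L0" using UL0(4) C sp by blast
    have IH: "stL L0 C' = Lam (lattice_path_matroid m d U0 L0) (Es C')" using Suc.IH[OF UL0(1-3) C'F] .
    have del: "mdelete ?M (Suc m) = lattice_path_matroid m d U0 L0" using mdelete_lpm[OF Pr _ UL0(4)] C sp by metis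
    have nB: "Suc m \<notin> Es C" using Suc_in_Es[OF lC] C(2) by simp
    have lam: "Lam ?M (Es C) = Lam (mdelete ?M (Suc m)) (Es C)" using Lam_props(2)[OF Lam mat gr(2) baseF[OF C(1)]] gr nB by simp
    have EsC: "Es C = Es C'" using sp Es_snoc_F[OF lC'] by simp
    have clC: "cl C L" using cl_of C(1) Pr(2) by blast
    have clC': "cl C' L0" using cl_of C'F UL0(2) by blast
    have cntC': "cnt_e C' = d" using cntF[OF C(1)] sp by simp
    have ep: "\<forall>a<cnt_e C'. epos L0 a = epos L a"
    proof (intro allI impI)
      fix a assume a: "a < cnt_e C'"
      have "ce C m = d" using sp lC' cntC' by simp
      moreover have "ce C m \<le> ce L m" using clC cl.ce_le by blast
      ultimately have am: "a < ce L m" using a cntC' by simp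
      have "\<forall>i\<le>m. ce L0 i = min (ce L i) d" using UL0(5) ce_le_cnt[of _ L] lL by (simp add: min_def)
      then show "epos L0 a = epos L a" using epos_min[of L0 m L d a] UL0(2) a cntC' am unfolding paths_def by simp
    qed
    have "stL L0 C' = stL L C - {Suc m}" using stL_trunc[OF _ lC' clC' ep] clC sp by simp
    moreover have "Suc m \<notin> stL L C" using cl.stL_sub[OF clC] nB by blast
    ultimately have "stL L C = stL L0 C'" by simp
    then show "stL L C = Lam ?M (Es C)" using IH lam del EsC by simp
  qed
  have S2: "S_lex ?M = stL L ` ?F" using conj2 Suc.prems by blast
  have bij: "bij_betw (Lam ?M) (bases ?M) (S_lex ?M)" using Lam_bij[OF Lam mat] .
  show ?case
  proof (cases "C ! m")
    case False then show ?thesis using claimA Suc.prems(4) by blast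
  next
    case True
    have C: "C \<in> ?F" using Suc.prems(4) .
    define C' where "C' = take m C"
    have lC: "length C = Suc m" using lenF C .
    have sp: "C = C' @ [True]" unfolding C'_def using snoc_split[OF lC] True by simp
    have lC': "length C' = m" unfolding C'_def using lC by simp
    obtain U1 L1 where UL1: "U1 \<in> paths m (d - 1)" "L1 \<in> paths m (d - 1)" "weakly_above U1 L1"
      "{C'. C' @ [True] \<in> ?F} = interval_paths m (d - 1) U1 L1" "\<forall>i\<le>m. ce L1 i = min (ce L i) (d - 1)"
      using F1_repr[OF Pr, of C'] C sp by metis
    have con: "mcontract ?M (Suc m) = lattice_path_matroid m (d - 1) U1 L1" using mcontract_lpm[OF Pr _ UL1(4)] C sp by metis
    have inB: "Suc m \<in> Es C" using Suc_in_Es[OF lC] True by simp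
    have lam: "Lam ?M (Es C) - {Suc m} = Lam (mcontract ?M (Suc m)) (Es C - {Suc m})"
      using Lam_props(3)[OF Lam mat gr(2) baseF[OF C]] gr inB by simp
    have trunc: "\<And>D. D \<in> ?F \<Longrightarrow> D ! m \<Longrightarrow> take m D \<in> interval_paths m (d - 1) U1 L1 \<and> stL L1 (take m D) = stL L D - {Suc m}"
    proof -
      fix D assume D: "D \<in> ?F" "D ! m"
      define D' where "D' = take m D"
      have lD: "length D = Suc m" using lenF D(1) .
      have spD: "D = D' @ [True]" unfolding D'_def using snoc_split[OF lD] D(2) by simp
      have lD': "length D' = m" unfolding D'_def using lD by simp
      have D'F: "D' \<in> interval_paths m (d - 1) U1 L1" using UL1(4) D(1) spD by blast
      have clD: "cl D L" using cl_of D(1) Pr(2) by blast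
      have clD': "cl D' L1" using cl_of D'F UL1(2) by blast
      have cntD': "cnt_e D' = d - 1" using D'F unfolding interval_paths_def paths_def by simp
      have ep: "\<forall>a<cnt_e D'. epos L1 a = epos L a"
      proof (intro allI impI)
        fix a assume a: "a < cnt_e D'"
        have "ce L (Suc m) \<le> Suc (ce L m)" by (rule ce_Suc_le)
        then have "d - 1 \<le> ce L m" using lL by simp
        then have am: "a < ce L m" using a cntD' by simp
        show "epos L1 a = epos L a" using epos_min[of L1 m L "d - 1" a] UL1(2,5) a cntD' am unfolding paths_def by simp
      qed
      have "stL L1 D' = stL L D - {Suc m}" using stL_trunc[OF _ lD' clD' ep] clD spD by simp
      then show "take m D \<in> interval_paths m (d - 1) U1 L1 \<and> stL L1 (take m D) = stL L D - {Suc m}"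
        using D'F unfolding D'_def by simp
    qed
    have C'F: "C' \<in> interval_paths m (d - 1) U1 L1" and trC: "stL L1 C' = stL L C - {Suc m}"
      using trunc[OF C True] unfolding C'_def by auto
    have IH: "stL L1 C' = Lam (lattice_path_matroid m (d - 1) U1 L1) (Es C')" using Suc.IH[OF UL1(1-3) C'F] .
    have EsC: "Es C - {Suc m} = Es C'" using sp Es_snoc_T[OF lC'] by simp
    have eqm: "Lam ?M (Es C) - {Suc m} = stL L C - {Suc m}" using lam con EsC IH trC by simp
    have "Lam ?M (Es C) \<in> S_lex ?M" using bij baseF[OF C] bij_betwE by blast
    then obtain D where D: "D \<in> ?F" "Lam ?M (Es C) = stL L D" using S2 by blast
    show ?thesis
    proof (cases "D ! m")
      case False
      then have "Lam ?M (Es D) = Lam ?M (Es C)" using claimA[OF D(1)] D(2) by simp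
      then have "Es D = Es C" using bij_betw_imp_inj_on[OF bij] baseF[OF D(1)] baseF[OF C] by (simp add: inj_on_eq_iff)
      then have "D = C" using Es_inj lenF D(1) C by metis
      then show ?thesis using False True by simp
    next
      case Dm: True
      have tD: "take m D \<in> interval_paths m (d - 1) U1 L1" "stL L1 (take m D) = stL L D - {Suc m}" using trunc[OF D(1) Dm] by auto
      have "stL L1 (take m D) = stL L1 C'" using tD(2) D(2) eqm trC by simp
      moreover have "cl (take m D) L1" "cl C' L1" using cl_of tD(1) C'F UL1(2) by blast+
      moreover have "length (take m D) = length C'" "cnt_e (take m D) = cnt_e C'"
        using tD(1) C'F unfolding interval_paths_def paths_def by auto
      ultimately have "take m D = C'" using stL_inj by blast
      then have "D = C" using sp snoc_split[of D m] lenF[OF D(1)] Dm by simp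
      then show ?thesis using D(2) by simp
    qed
  qed
qed

theorem theorem4p8:
  fixes n d :: nat and U L :: "bool list"
  assumes "U \<in> paths n d" and "L \<in> paths n d" and "weakly_above U L"
  shows "(\<forall>Lam. is_Lambda_family Lam \<longrightarrow>
            (\<forall>C\<in>interval_paths n d U L.
               stL L C = Lam (lattice_path_matroid n d U L) (Es C)))
         \<and> S_lex (lattice_path_matroid n d U L) = stL L ` interval_paths n d U L"
  using conj1[OF _ assms] conj2[OF assms] by blast


end
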